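(* For the base family under the $\mathbf{c}$-weighted MaxWeight algorithm with $\|\boldsymbol\sigma^{(\epsilon)}\|^2\le\widetilde\sigma^2$ for all $\epsilon$ (with $\widetilde\sigma$ independent of $\epsilon$), there exist $\nu'_{\min}>0$ and, for each $r\in\{1,2,\dots\}$, a constant $M_r$, depending only on $r,\widetilde\sigma,\boldsymbol\nu,A_{\max},\nu_{\min},\mathbf{c},n$ and not on $\epsilon$, such that for all $0<\epsilon\le\nu'_{\min}$, $$\mathbb{E}\big[\|\overline{Q}^{(\epsilon)}_{\perp\mathcal{K}_{\mathbf{c}}}\|_{\mathbf{c}}^r\big]\le (M_r)^r .$$
   Context: Fix $n\ge2$ and $\mathbf{c}=(c_{ij})$ with all $c_{ij}>0$. $\langle x,y\rangle_{\mathbf{c}}=\sum_{ij}c_{ij}x_{ij}y_{ij}$, $\|x\|_{\mathbf{c}}^2=\langle x,x\rangle_{\mathbf{c}}$. $\mathcal{P}$: $n\times n$ permutation matrices. $\mathcal{F}$: nonnegative $n\times n$ matrices with all row and column sums $1$. $\mathcal{K}_{\mathbf{c}}=\{x: x_{ij}=(w_i+\tilde w_j)/c_{ij},\ w,\tilde w\in\mathbb{R}_+^n\}$ (a closed convex cone); $x_{\parallel\mathcal{K}_{\mathbf{c}}}=\arg\min_{y\in\mathcal{K}_{\mathbf{c}}}\|x-y\|_{\mathbf{c}}$ and $x_{\perp\mathcal{K}_{\mathbf{c}}}=x-x_{\parallel\mathcal{K}_{\mathbf{c}}}$. Dynamics: $Q(t+1)=Q(t)+A(t)-S(t)+U(t)$,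 $U_{ij}(t)=\max(0,S_{ij}(t)-Q_{ij}(t)-A_{ij}(t))$; $\mathbf{c}$-weighted MaxWeight picks $S(t)\in\arg\max_{s\in\mathcal{P}}\langle Q(t),s\rangle_{\mathbf{c}}$, ties uniformly at random. Base family: for $0<\epsilon<1$, arrivals $A^{(\epsilon)}_{ij}(t)\in\{0,\dots,A_{\max}\}$ independent over $(i,j),t$, identically distributed in $t$, mean $(1-\epsilon)\boldsymbol\nu$ with $\boldsymbol\nu$ in the relative interior of $\mathcal{F}$, $\nu_{\min}=\min\nu_{ij}>0$, variance vector $(\boldsymbol\sigma^{(\epsilon)})^2$; the queue-length process converges in distribution to a steady-state vector $\overline{Q}^{(\epsilon)}$. *)

theory Defs
  imports "HOL-Analysis.Analysis" "HOL-Probability.Probability"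
begin

text \<open>n x n matrices are indexed by a finite type 'n (n = CARD('n)).
  Real matrices: real^'n^'n; queue-length / arrival matrices: nat^'n^'n.\<close>

definition cinner :: "real^'n^'n \<Rightarrow> real^'n^'n \<Rightarrow> real^'n^'n \<Rightarrow> real" where
  "cinner c x y = (\<Sum>i\<in>UNIV. \<Sum>j\<in>UNIV. c$i$j * x$i$j * y$i$j)"

definition cnorm :: "real^'n^'n \<Rightarrow> real^'n^'n \<Rightarrow> real" where
  "cnorm c x = sqrt (cinner c x x)"

definition perm_matrices :: "(real^'n^'n) set" where
  "perm_matrices = {(\<chi> i j. if p i = j then 1 else 0) | p. p permutes (UNIV :: 'n set)}"

definition doubly_stochastic :: "(real^'n^'n) set" where
  "doubly_stochastic = {x. (\<forall>i j. 0 \<le> x$i$j) \<and> (\<forall>i. (\<Sum>j\<in>UNIV. x$i$j) = 1)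
                                \<and> (\<forall>j. (\<Sum>i\<in>UNIV. x$i$j) = 1)}"

definition cone_K :: "real^'n^'n \<Rightarrow> (real^'n^'n) set" where
  "cone_K c = {x. \<exists>w w' :: real^'n. (\<forall>i. 0 \<le> w$i) \<and> (\<forall>j. 0 \<le> w'$j) \<and>
                   x = (\<chi> i j. (w$i + w'$j) / c$i$j)}"

definition proj_K :: "real^'n^'n \<Rightarrow> real^'n^'n \<Rightarrow> real^'n^'n" where
  "proj_K c x = (SOME y. y \<in> cone_K c \<and> (\<forall>z\<in>cone_K c. cnorm c (x - y) \<le> cnorm c (x - z)))"

definition perp_K :: "real^'n^'n \<Rightarrow> real^'n^'n \<Rightarrow> real^'n^'n" where
  "perp_K c x = x - proj_K c x"

definition realmat :: "nat^'n^'n \<Rightarrow> real^'n^'n" where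
  "realmat Q = (\<chi> i j. real (Q$i$j))"

definition maxweight :: "real^'n^'n \<Rightarrow> nat^'n^'n \<Rightarrow> (real^'n^'n) pmf" where
  "maxweight c Q = pmf_of_set {s \<in> perm_matrices.
       \<forall>s'\<in>perm_matrices. cinner c (realmat Q) s' \<le> cinner c (realmat Q) s}"

definition arrivals :: "('n \<Rightarrow> 'n \<Rightarrow> nat pmf) \<Rightarrow> (nat^'n^'n) pmf" where
  "arrivals a = map_pmf (\<lambda>f. \<chi> i j. f (i, j)) (Pi_pmf UNIV 0 (\<lambda>(i, j). a i j))"

definition qstep :: "real^'n^'n \<Rightarrow> ('n \<Rightarrow> 'n \<Rightarrow> nat pmf) \<Rightarrow> nat^'n^'n \<Rightarrow> (nat^'n^'n) pmf" where
  "qstep c a Q = bind_pmf (arrivals a) (\<lambda>A. bind_pmf (maxweight c Q) (\<lambda>S.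
      return_pmf (\<chi> i j. let q = real (Q$i$j); aa = real (A$i$j); s = S$i$j;
                             u = max 0 (s - q - aa)
                         in nat \<lfloor>q + aa - s + u\<rfloor>)))"

primrec qdist :: "real^'n^'n \<Rightarrow> ('n \<Rightarrow> 'n \<Rightarrow> nat pmf) \<Rightarrow> (nat^'n^'n) pmf \<Rightarrow> nat \<Rightarrow> (nat^'n^'n) pmf" where
  "qdist c a q0 0 = q0"
| "qdist c a q0 (Suc t) = bind_pmf (qdist c a q0 t) (qstep c a)"

end

theory Submission
  imports Defs
begin


definition sqm :: "real^'n^'n \<Rightarrow> real^'n^'n \<Rightarrow> real^'n^'n" where
  "sqm c x = (\<chi> i j. sqrt (c$i$j) * x$i$j)"

lemma cinner_sqm:
  assumes "\<forall>i j. 0 < c$i$j"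
  shows "cinner c x y = inner (sqm c x) (sqm c y)"
proof -
  have e: "\<And>i j. sqrt (c$i$j) * x$i$j * (sqrt (c$i$j) * y$i$j) = c$i$j * x$i$j * y$i$j"
  proof -
    fix i j
    have "sqrt (c$i$j) * sqrt (c$i$j) = c$i$j" using assms by (simp add: less_imp_le)
    then show "sqrt (c$i$j) * x$i$j * (sqrt (c$i$j) * y$i$j) = c$i$j * x$i$j * y$i$j"
      by (metis mult.assoc mult.commute)
  qed
  show ?thesis
    unfolding cinner_def sqm_def inner_vec_def by (simp add: e)
qed

lemma cnorm_sqm:
  assumes "\<forall>i j. 0 < c$i$j"
  shows "cnorm c x = norm (sqm c x)"
  by (simp add: cnorm_def cinner_sqm[OF assms] norm_eq_sqrt_inner)

lemma sqm_diff: "sqm c (x - y) = sqm c x - sqm c y"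
  by (simp add: sqm_def vec_eq_iff algebra_simps)
lemma sqm_add: "sqm c (x + y) = sqm c x + sqm c y"
  by (simp add: sqm_def vec_eq_iff algebra_simps)


definition adjF :: "('n \<times> 'n) set \<Rightarrow> ('n + 'n) \<Rightarrow> ('n + 'n) \<Rightarrow> bool" where
  "adjF F u w = (case u of Inl i \<Rightarrow> (case w of Inr j \<Rightarrow> (i,j) \<in> F | Inl _ \<Rightarrow> False)
                         | Inr j \<Rightarrow> (case w of Inl i \<Rightarrow> (i,j) \<in> F | Inr _ \<Rightarrow> False))"

definition rw :: "('n + 'n) \<Rightarrow> ('n + 'n) \<Rightarrow> 'n" where
  "rw u w = (case u of Inl i \<Rightarrow> i | Inr _ \<Rightarrow> (case w of Inl i \<Rightarrow> i | Inr j \<Rightarrow> j))"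
definition cl :: "('n + 'n) \<Rightarrow> ('n + 'n) \<Rightarrow> 'n" where
  "cl u w = (case u of Inr j \<Rightarrow> j | Inl _ \<Rightarrow> (case w of Inr j \<Rightarrow> j | Inl i \<Rightarrow> i))"

lemma adjF_cases:
  assumes "adjF F u w"
  obtains i j where "u = Inl i" "w = Inr j" "(i,j) \<in> F" | i j where "u = Inr j" "w = Inl i" "(i,j) \<in> F"
  using assms unfolding adjF_def by (auto split: sum.splits)

lemma adjF_pos: "adjF F u w \<Longrightarrow> (rw u w, cl u w) \<in> F"
  by (erule adjF_cases) (auto simp: rw_def cl_def)

lemma adjF_rw: "adjF F u w \<Longrightarrow> (if rw u w = i then 1 else 0 :: real) =
   (if u = Inl i then 1 else 0) + (if w = Inl i then 1 else 0)"
  by (erule adjF_cases) (auto simp: rw_def cl_def)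

lemma adjF_cl: "adjF F u w \<Longrightarrow> (if cl u w = j then 1 else 0 :: real) =
   (if u = Inr j then 1 else 0) + (if w = Inr j then 1 else 0)"
  by (erule adjF_cases) (auto simp: rw_def cl_def)

lemma adjF_pos_inj: "adjF F u w \<Longrightarrow> adjF F u' w' \<Longrightarrow> rw u w = rw u' w' \<Longrightarrow> cl u w = cl u' w' \<Longrightarrow>
   (u = u' \<and> w = w') \<or> (u = w' \<and> w = u')"
  by (erule adjF_cases; erule adjF_cases) (auto simp: rw_def cl_def)

lemma adjF_isl: "adjF F u w \<Longrightarrow> isl w \<longleftrightarrow> \<not> isl u"
  by (erule adjF_cases) auto

lemma cycle_exists:
  fixes F :: "('n::finite \<times> 'n) set"
  assumes ne: "F \<noteq> {}"
    and R: "\<And>i j. (i,j) \<in> F \<Longrightarrow> \<exists>j'. j' \<noteq> j \<and> (i,j') \<in> F"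
    and C: "\<And>i j. (i,j) \<in> F \<Longrightarrow> \<exists>i'. i' \<noteq> i \<and> (i',j) \<in> F"
  shows "\<exists>E :: real^'n^'n. E \<noteq> 0 \<and> (\<forall>i. (\<Sum>j\<in>UNIV. E$i$j) = 0) \<and> (\<forall>j. (\<Sum>i\<in>UNIV. E$i$j) = 0)
            \<and> (\<forall>i j. E$i$j \<noteq> 0 \<longrightarrow> (i,j) \<in> F)"
proof -
  let ?adj = "adjF F"
  have ext: "\<exists>z. ?adj w z \<and> z \<noteq> u" if "?adj u w" for u w
    using that
  proof (rule adjF_cases)
    fix i j assume "u = Inl i" "w = Inr j" "(i,j) \<in> F"
    then obtain i' where "i' \<noteq> i" "(i',j) \<in> F" using C by blast
    then show ?thesis using \<open>u = Inl i\<close> \<open>w = Inr j\<close> by (intro exI[of _ "Inl i'"]) (auto simp: adjF_def)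
  next
    fix i j assume "u = Inr j" "w = Inl i" "(i,j) \<in> F"
    then obtain j' where "j' \<noteq> j" "(i,j') \<in> F" using R by blast
    then show ?thesis using \<open>u = Inr j\<close> \<open>w = Inl i\<close> by (intro exI[of _ "Inr j'"]) (auto simp: adjF_def)
  qed
  obtain i0 j0 where ij0: "(i0,j0) \<in> F" using ne by auto
  define nxt where "nxt = (\<lambda>(pr::('n+'n)\<times>('n+'n)). (snd pr, SOME z. ?adj (snd pr) z \<and> z \<noteq> fst pr))"
  define walk where "walk = (\<lambda>k. (nxt ^^ k) (Inl i0, Inr j0))"
  have walk_Suc: "walk (Suc k) = nxt (walk k)" for k by (simp add: walk_def)
  have wadj: "?adj (fst (walk k)) (snd (walk k))" for k
  proof (induction k)
    case 0 then show ?case using ij0 by (simp add: walk_def adjF_def)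
  next
    case (Suc k)
    then have "\<exists>z. ?adj (snd (walk k)) z \<and> z \<noteq> fst (walk k)" using ext by blast
    then have "?adj (snd (walk k)) (SOME z. ?adj (snd (walk k)) z \<and> z \<noteq> fst (walk k))
       \<and> (SOME z. ?adj (snd (walk k)) z \<and> z \<noteq> fst (walk k)) \<noteq> fst (walk k)"
      by (rule someI_ex)
    then show ?case by (simp add: walk_Suc nxt_def case_prod_unfold)
  qed
  define v where "v = (\<lambda>k. fst (walk k))"
  have vs: "snd (walk k) = v (Suc k)" for k by (simp add: v_def walk_Suc nxt_def case_prod_unfold)
  have vadj: "?adj (v k) (v (Suc k))" for k using wadj[of k] by (simp add: vs v_def)
  have vnb: "v (Suc (Suc k)) \<noteq> v k" for k
  proof -
    have "\<exists>z. ?adj (snd (walk k)) z \<and> z \<noteq> fst (walk k)" using ext wadj by blast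
    then have "(SOME z. ?adj (snd (walk k)) z \<and> z \<noteq> fst (walk k)) \<noteq> fst (walk k)"
      by (rule someI2_ex) auto
    then show ?thesis by (simp add: v_def walk_Suc nxt_def case_prod_unfold)
  qed
  have vpar: "isl (v k) \<longleftrightarrow> even k" for k
  proof (induction k)
    case 0 then show ?case by (simp add: v_def walk_def)
  next
    case (Suc k) then show ?case using adjF_isl[OF vadj[of k]] by simp
  qed
  define N where "N = card (UNIV :: ('n+'n) set)"
  have "\<not> inj_on v {..N}"
  proof
    assume "inj_on v {..N}"
    then have "card (v ` {..N}) = Suc N" by (simp add: card_image)
    moreover have "card (v ` {..N}) \<le> N" unfolding N_def by (rule card_mono) auto
    ultimately show False by simp
  qed
  then obtain k1 m1 where "k1 \<noteq> m1" "v k1 = v m1" unfolding inj_on_def by blast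
  then have exP: "\<exists>m. \<exists>k<m. v k = v m" by (metis linorder_neqE_nat)
  define m where "m = (LEAST m. \<exists>k<m. v k = v m)"
  have "\<exists>k<m. v k = v m" unfolding m_def by (rule LeastI_ex[OF exP])
  then obtain k where km: "k < m" "v k = v m" by blast
  have minm: "\<And>l k'. l < m \<Longrightarrow> k' < l \<Longrightarrow> v k' \<noteq> v l"
    unfolding m_def using not_less_Least by blast
  have parkm: "((-1::real) ^ k) = (-1) ^ m"
  proof -
    have "even k = even m" using vpar[of k] vpar[of m] km(2) by simp
    then show ?thesis by (metis neg_one_even_power neg_one_odd_power)
  qed
  define pos where "pos = (\<lambda>l. (rw (v l) (v (Suc l)), cl (v l) (v (Suc l))))"
  define E :: "real^'n^'n" where
    "E = (\<chi> i j. \<Sum>l\<in>{k..<m}. (-1) ^ l * (if pos l = (i,j) then 1 else 0))"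
  have Eij: "E$i$j = (\<Sum>l\<in>{k..<m}. (-1) ^ l * (if pos l = (i,j) then 1 else 0))" for i j
    by (simp add: E_def)
  have rows: "(\<Sum>j\<in>UNIV. E$i$j) = 0" for i
  proof -
    define b where "b = (\<lambda>l. (-1::real) ^ l * (if v l = Inl i then 1 else 0))"
    have "(\<Sum>j\<in>UNIV. E$i$j) = (\<Sum>l\<in>{k..<m}. (-1) ^ l * (\<Sum>j\<in>UNIV. (if pos l = (i,j) then 1 else 0)))"
      unfolding Eij by (subst sum.swap) (simp add: sum_distrib_left)
    also have "\<dots> = (\<Sum>l\<in>{k..<m}. (-1) ^ l * (if rw (v l) (v (Suc l)) = i then 1 else 0))"
      by (intro sum.cong refl) (auto simp: pos_def)
    also have "\<dots> = (\<Sum>l\<in>{k..<m}. b l - b (Suc l))"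
      by (intro sum.cong refl) (simp add: adjF_rw[OF vadj] b_def algebra_simps)
    also have "\<dots> = - (\<Sum>l\<in>{k..<m}. b (Suc l) - b l)" by (simp only: sum_negf[symmetric] minus_diff_eq)
    also have "\<dots> = b k - b m" using km(1) by (simp add: sum_Suc_diff')
    also have "\<dots> = 0" using km(2) parkm by (simp add: b_def)
    finally show ?thesis .
  qed
  have cols: "(\<Sum>i\<in>UNIV. E$i$j) = 0" for j
  proof -
    define b where "b = (\<lambda>l. (-1::real) ^ l * (if v l = Inr j then 1 else 0))"
    have "(\<Sum>i\<in>UNIV. E$i$j) = (\<Sum>l\<in>{k..<m}. (-1) ^ l * (\<Sum>i\<in>UNIV. (if pos l = (i,j) then 1 else 0)))"
      unfolding Eij by (subst sum.swap) (simp add: sum_distrib_left)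
    also have "\<dots> = (\<Sum>l\<in>{k..<m}. (-1) ^ l * (if cl (v l) (v (Suc l)) = j then 1 else 0))"
      by (intro sum.cong refl) (auto simp: pos_def)
    also have "\<dots> = (\<Sum>l\<in>{k..<m}. b l - b (Suc l))"
      by (intro sum.cong refl) (simp add: adjF_cl[OF vadj] b_def algebra_simps)
    also have "\<dots> = - (\<Sum>l\<in>{k..<m}. b (Suc l) - b l)" by (simp only: sum_negf[symmetric] minus_diff_eq)
    also have "\<dots> = b k - b m" using km(1) by (simp add: sum_Suc_diff')
    also have "\<dots> = 0" using km(2) parkm by (simp add: b_def)
    finally show ?thesis .
  qed
  have supp: "(i,j) \<in> F" if "E$i$j \<noteq> 0" for i j
  proof -
    have "\<exists>l. pos l = (i,j)"
    proof (rule ccontr)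
      assume "\<nexists>l. pos l = (i,j)"
      then have "E$i$j = 0" unfolding Eij by (intro sum.neutral) auto
      then show False using that by simp
    qed
    then obtain l where "pos l = (i,j)" by blast
    then show ?thesis using adjF_pos[OF vadj[of l]] by (simp add: pos_def)
  qed
  have uniq: "pos l \<noteq> pos k" if "k < l" "l < m" for l
  proof
    assume "pos l = pos k"
    then have "(v l = v k \<and> v (Suc l) = v (Suc k)) \<or> (v l = v (Suc k) \<and> v (Suc l) = v k)"
      using adjF_pos_inj[OF vadj[of l] vadj[of k]] by (simp add: pos_def)
    then show False
    proof
      assume "v l = v k \<and> v (Suc l) = v (Suc k)"
      then show False using minm[of l k] that by auto
    next
      assume h: "v l = v (Suc k) \<and> v (Suc l) = v k"
      show False
      proof (cases "l = Suc k")
        case True then show False using h vnb[of k] by simp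
      next
        case False then show False using h minm[of l "Suc k"] that by auto
      qed
    qed
  qed
  have "E $ fst (pos k) $ snd (pos k) = (\<Sum>l\<in>{k..<m}. (-1) ^ l * (if l = k then 1 else 0))"
    unfolding Eij using uniq by (intro sum.cong refl) auto
  also have "\<dots> = (\<Sum>l\<in>{k..<m}. (if l = k then (-1) ^ k else 0))"
    by (intro sum.cong refl) auto
  also have "\<dots> = (-1) ^ k" using km(1) by simp
  finally have "E $ fst (pos k) $ snd (pos k) \<noteq> 0" by simp
  then have "E \<noteq> 0" by auto
  then show ?thesis using rows cols supp by blast
qed


definition fr :: "real^'n^'n \<Rightarrow> ('n \<times> 'n) set" where
  "fr x = {(i,j). 0 < x$i$j \<and> x$i$j < 1}"

lemma ds_nonneg: "x \<in> doubly_stochastic \<Longrightarrow> 0 \<le> x$i$j"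
  by (simp add: doubly_stochastic_def)
lemma ds_row: "x \<in> doubly_stochastic \<Longrightarrow> (\<Sum>j\<in>UNIV. x$i$j) = 1"
  by (simp add: doubly_stochastic_def)
lemma ds_col: "x \<in> doubly_stochastic \<Longrightarrow> (\<Sum>i\<in>UNIV. x$i$j) = 1"
  by (simp add: doubly_stochastic_def)

lemma ds_le1:
  fixes x :: "real^'n::finite^'n"
  assumes "x \<in> doubly_stochastic" shows "x$i$j \<le> 1"
proof -
  have "x$i$j \<le> (\<Sum>j\<in>UNIV. x$i$j)"
    by (rule member_le_sum) (auto simp: ds_nonneg[OF assms])
  then show ?thesis using ds_row[OF assms] by simp
qed

lemma int_between: "(a::real) \<in> \<int> \<Longrightarrow> 0 < a \<Longrightarrow> a < 1 \<Longrightarrow> False"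
  by (metis Ints_cases of_int_0_less_iff of_int_less_1_iff not_less zero_less_iff_neq_zero int_one_le_iff_zero_less)

lemma two_le_sum:
  fixes f :: "'a::finite \<Rightarrow> real"
  assumes "\<And>k. 0 \<le> f k" "a \<noteq> b" "f a = 1" "f b = 1"
  shows "2 \<le> sum f UNIV"
proof -
  have "sum f {a,b} \<le> sum f UNIV" by (rule sum_mono2) (auto simp: assms)
  then show ?thesis using assms by simp
qed

lemma fr_row:
  fixes x :: "real^'n::finite^'n"
  assumes ds: "x \<in> doubly_stochastic" and ij: "(i,j) \<in> fr x"
  shows "\<exists>j'. j' \<noteq> j \<and> (i,j') \<in> fr x"
proof (rule ccontr)
  assume nt: "\<not> (\<exists>j'. j' \<noteq> j \<and> (i,j') \<in> fr x)"
  then have int: "x$i$j' \<in> \<int>" if "j' \<noteq> j" for j'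
  proof -
    have "\<not> (0 < x$i$j' \<and> x$i$j' < 1)" using that nt by (auto simp: fr_def)
    then have "x$i$j' = 0 \<or> x$i$j' = 1" using ds_nonneg[OF ds] ds_le1[OF ds] by (smt (verit))
    then show ?thesis by auto
  qed
  have "1 = (\<Sum>j'\<in>UNIV. x$i$j')" using ds_row[OF ds] by simp
  also have "\<dots> = x$i$j + (\<Sum>j'\<in>UNIV - {j}. x$i$j')"
    by (simp add: sum.remove)
  finally have "x$i$j = 1 - (\<Sum>j'\<in>UNIV - {j}. x$i$j')" by simp
  moreover have "(\<Sum>j'\<in>UNIV - {j}. x$i$j') \<in> \<int>" by (intro Ints_sum) (auto intro: int)
  ultimately have "x$i$j \<in> \<int>" by simp
  then show False using ij int_between by (auto simp: fr_def)
qed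

lemma fr_col:
  fixes x :: "real^'n::finite^'n"
  assumes ds: "x \<in> doubly_stochastic" and ij: "(i,j) \<in> fr x"
  shows "\<exists>i'. i' \<noteq> i \<and> (i',j) \<in> fr x"
proof (rule ccontr)
  assume nt: "\<not> (\<exists>i'. i' \<noteq> i \<and> (i',j) \<in> fr x)"
  then have int: "x$i'$j \<in> \<int>" if "i' \<noteq> i" for i'
  proof -
    have "\<not> (0 < x$i'$j \<and> x$i'$j < 1)" using that nt by (auto simp: fr_def)
    then have "x$i'$j = 0 \<or> x$i'$j = 1" using ds_nonneg[OF ds] ds_le1[OF ds] by (smt (verit))
    then show ?thesis by auto
  qed
  have "1 = (\<Sum>i'\<in>UNIV. x$i'$j)" using ds_col[OF ds] by simp
  also have "\<dots> = x$i$j + (\<Sum>i'\<in>UNIV - {i}. x$i'$j)"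
    by (simp add: sum.remove)
  finally have "x$i$j = 1 - (\<Sum>i'\<in>UNIV - {i}. x$i'$j)" by simp
  moreover have "(\<Sum>i'\<in>UNIV - {i}. x$i'$j) \<in> \<int>" by (intro Ints_sum) (auto intro: int)
  ultimately have "x$i$j \<in> \<int>" by simp
  then show False using ij int_between by (auto simp: fr_def)
qed

lemma integral_ds_perm:
  fixes x :: "real^'n::finite^'n"
  assumes ds: "x \<in> doubly_stochastic" and fr0: "fr x = {}"
  shows "\<exists>p. p permutes UNIV \<and> (\<forall>i j. x$i$j = (if p i = j then 1 else 0))"
proof -
  have z1: "x$i$j = 0 \<or> x$i$j = 1" for i j
  proof -
    have "(i,j) \<notin> fr x" using fr0 by simp
    then have "\<not> (0 < x$i$j \<and> x$i$j < 1)" by (simp add: fr_def)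
    then show ?thesis using ds_nonneg[OF ds, of i j] ds_le1[OF ds, of i j] by linarith
  qed
  have ex: "\<exists>j. x$i$j = 1" for i
  proof (rule ccontr)
    assume "\<nexists>j. x$i$j = 1"
    then have "\<forall>j. x$i$j = 0" using z1 by blast
    then show False using ds_row[OF ds, of i] by simp
  qed
  define p where "p = (\<lambda>i. SOME j. x$i$j = 1)"
  have p1: "x$i$(p i) = 1" for i unfolding p_def using ex[of i] by (rule someI_ex)
  have px: "x$i$j = (if p i = j then 1 else 0)" for i j
  proof (cases "p i = j")
    case True then show ?thesis using p1 by auto
  next
    case False
    show ?thesis
    proof (rule ccontr)
      assume "\<not> ?thesis"
      then have "x$i$j = 1" using z1 False by auto
      then have "2 \<le> (\<Sum>j\<in>UNIV. x$i$j)"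
        using two_le_sum[of "\<lambda>j. x$i$j" j "p i"] p1 False ds_nonneg[OF ds] by auto
      then show False using ds_row[OF ds] by simp
    qed
  qed
  have "inj p"
  proof (rule injI)
    fix a b assume "p a = p b"
    show "a = b"
    proof (rule ccontr)
      assume "a \<noteq> b"
      moreover have "x$a$(p b) = 1" using p1[of a] \<open>p a = p b\<close> by simp
      ultimately have "2 \<le> (\<Sum>i\<in>UNIV. x$i$(p b))"
        using two_le_sum[of "\<lambda>i. x$i$(p b)" a b] p1[of b] ds_nonneg[OF ds] by auto
      then show False using ds_col[OF ds] by simp
    qed
  qed
  then have "p permutes UNIV" by (intro inj_imp_permutes) auto
  then show ?thesis using px by blast
qed

lemma birkhoff_ineq:
  fixes x X :: "real^'n::finite^'n"
  assumes "x \<in> doubly_stochastic"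
  shows "\<exists>p. p permutes UNIV \<and> (\<Sum>i\<in>UNIV. \<Sum>j\<in>UNIV. X$i$j * x$i$j) \<le> (\<Sum>i\<in>UNIV. X$i$(p i))"
  using assms
proof (induction "card (fr x)" arbitrary: x rule: less_induct)
  case less
  note ds = less.prems
  show ?case
  proof (cases "fr x = {}")
    case True
    then obtain p where p: "p permutes UNIV" "\<forall>i j. x$i$j = (if p i = j then 1 else 0)"
      using integral_ds_perm[OF ds] by blast
    have "(\<Sum>j\<in>UNIV. X$i$j * x$i$j) = X$i$(p i)" for i
    proof -
      have "(\<Sum>j\<in>UNIV. X$i$j * x$i$j) = (\<Sum>j\<in>UNIV. if p i = j then X$i$j else 0)"
        using p(2) by (intro sum.cong) auto
      then show ?thesis by simp
    qed
    then have "(\<Sum>i\<in>UNIV. \<Sum>j\<in>UNIV. X$i$j * x$i$j) = (\<Sum>i\<in>UNIV. X$i$(p i))"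
      by simp
    then show ?thesis using p(1) by auto
  next
    case False
    obtain E :: "real^'n^'n" where E: "E \<noteq> 0" "\<And>i. (\<Sum>j\<in>UNIV. E$i$j) = 0" "\<And>j. (\<Sum>i\<in>UNIV. E$i$j) = 0"
      "\<And>i j. E$i$j \<noteq> 0 \<Longrightarrow> (i,j) \<in> fr x"
      using cycle_exists[OF False fr_row[OF ds] fr_col[OF ds]] by blast
    define s :: real where "s = (if 0 \<le> (\<Sum>i\<in>UNIV. \<Sum>j\<in>UNIV. X$i$j * E$i$j) then 1 else -1)"
    have s0: "s \<noteq> 0" by (simp add: s_def)
    have sX: "0 \<le> s * (\<Sum>i\<in>UNIV. \<Sum>j\<in>UNIV. X$i$j * E$i$j)" by (simp add: s_def)
    define E' :: "real^'n^'n" where "E' = (\<chi> i j. s * E$i$j)"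
    have E'ij: "E'$i$j = s * E$i$j" for i j by (simp add: E'_def)
    define Nn where "Nn = {p. E' $ fst p $ snd p < 0}"
    have "Nn \<noteq> {}"
    proof
      assume "Nn = {}"
      have nn: "0 \<le> E'$i$j" for i j
      proof -
        have "(i,j) \<notin> Nn" using \<open>Nn = {}\<close> by simp
        then show ?thesis by (simp add: Nn_def not_less)
      qed
      have "E'$i$j = 0" for i j
      proof -
        have "(\<Sum>j\<in>UNIV. E'$i$j) = 0" using E(2)[of i] by (simp add: E'ij sum_distrib_left[symmetric])
        then show ?thesis using nn by (simp add: sum_nonneg_eq_0_iff)
      qed
      then have "E = 0" using s0 by (simp add: E'ij vec_eq_iff)
      then show False using E(1) by simp
    qed
    define g where "g = (\<lambda>p. x $ fst p $ snd p / (- E' $ fst p $ snd p))"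
    define t where "t = Min (g ` Nn)"
    have finNn: "finite Nn" by simp
    have "t \<in> g ` Nn" unfolding t_def using finNn \<open>Nn \<noteq> {}\<close> by (intro Min_in) auto
    then obtain i0 j0 where ij0: "(i0,j0) \<in> Nn" "t = g (i0,j0)" by auto
    have tle: "t \<le> g q" if "q \<in> Nn" for q unfolding t_def using finNn that by (intro Min_le) auto
    have Nnfr: "q \<in> fr x" if "q \<in> Nn" for q
    proof -
      have "E $ fst q $ snd q \<noteq> 0" using that by (auto simp: Nn_def E'ij)
      then show ?thesis using E(4)[of "fst q" "snd q"] by simp
    qed
    have tpos: "0 < t" using ij0 Nnfr[OF ij0(1)] by (auto simp: g_def Nn_def fr_def divide_pos_neg)
    define y :: "real^'n^'n" where "y = (\<chi> i j. x$i$j + t * E'$i$j)"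
    have yij: "y$i$j = x$i$j + t * E'$i$j" for i j by (simp add: y_def)
    have ynn: "0 \<le> y$i$j" for i j
    proof (cases "E'$i$j < 0")
      case True
      then have "(i,j) \<in> Nn" by (simp add: Nn_def)
      then have "t \<le> x$i$j / (- E'$i$j)" using tle by (force simp: g_def)
      moreover have d: "0 < - E'$i$j" using True by simp
      ultimately have "t * (- E'$i$j) \<le> x$i$j / (- E'$i$j) * (- E'$i$j)"
        by (intro mult_right_mono) auto
      also have "\<dots> = x$i$j" using d by simp
      finally have "t * (- E'$i$j) \<le> x$i$j" .
      then show ?thesis by (simp add: yij)
    next
      case False then show ?thesis using tpos ds_nonneg[OF ds, of i j] by (simp add: yij)
    qed
    have yds: "y \<in> doubly_stochastic"
    proof -
      have "(\<Sum>j\<in>UNIV. y$i$j) = 1" for i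
        using ds_row[OF ds, of i] E(2)[of i]
        by (simp add: yij sum.distrib E'ij sum_distrib_left[symmetric] mult.assoc)
      moreover have "(\<Sum>i\<in>UNIV. y$i$j) = 1" for j
        using ds_col[OF ds, of j] E(3)[of j]
        by (simp add: yij sum.distrib E'ij sum_distrib_left[symmetric] mult.assoc)
      ultimately show ?thesis using ynn by (simp add: doubly_stochastic_def)
    qed
    have y0: "y$i0$j0 = 0" using ij0 by (simp add: yij g_def Nn_def)
    have sub: "fr y \<subseteq> fr x - {(i0,j0)}"
    proof
      fix q assume q: "q \<in> fr y"
      obtain i j where qij: "q = (i,j)" by fastforce
      have "(i,j) \<in> fr x"
      proof (cases "E$i$j = 0")
        case True then show ?thesis using q qij by (simp add: fr_def yij E'ij)
      next
        case False then show ?thesis using E(4) by blast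
      qed
      moreover have "(i,j) \<noteq> (i0,j0)" using q qij y0 by (auto simp: fr_def)
      ultimately show "q \<in> fr x - {(i0,j0)}" using qij by simp
    qed
    have "(i0,j0) \<in> fr x" using Nnfr[OF ij0(1)] .
    then have "fr y \<subset> fr x" using sub by blast
    then have "card (fr y) < card (fr x)" by (intro psubset_card_mono) auto
    then obtain p where p: "p permutes UNIV" "(\<Sum>i\<in>UNIV. \<Sum>j\<in>UNIV. X$i$j * y$i$j) \<le> (\<Sum>i\<in>UNIV. X$i$(p i))"
      using less.hyps[OF _ yds] by blast
    have "(\<Sum>i\<in>UNIV. \<Sum>j\<in>UNIV. X$i$j * y$i$j) = (\<Sum>i\<in>UNIV. \<Sum>j\<in>UNIV. X$i$j * x$i$j)
           + t * (s * (\<Sum>i\<in>UNIV. \<Sum>j\<in>UNIV. X$i$j * E$i$j))"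
      by (simp add: yij E'ij algebra_simps sum.distrib sum_distrib_left)
    moreover have "0 \<le> t * (s * (\<Sum>i\<in>UNIV. \<Sum>j\<in>UNIV. X$i$j * E$i$j))"
      using tpos sX by simp
    ultimately show ?thesis using p by fastforce
  qed
qed


lemma cnorm_nonneg:
  assumes "\<forall>i j. 0 < c$i$j" shows "0 \<le> cnorm c x"
  by (simp add: cnorm_sqm[OF assms])

lemma cnorm_triangle:
  assumes "\<forall>i j. 0 < c$i$j"
  shows "cnorm c (x + y) \<le> cnorm c x + cnorm c y"
  using norm_triangle_ineq[of "sqm c x" "sqm c y"] by (simp add: cnorm_sqm[OF assms] sqm_add)

lemma cnorm_minus:
  assumes "\<forall>i j. 0 < c$i$j"
  shows "cnorm c (x - y) = cnorm c (y - x)"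
  using norm_minus_commute[of "sqm c x" "sqm c y"] by (simp add: cnorm_sqm[OF assms] sqm_diff)

definition Lmap :: "real^'n^'n \<Rightarrow> real^'n \<Rightarrow> real^'n \<Rightarrow> real^'n^'n" where
  "Lmap c w w' = (\<chi> i j. (w$i + w'$j) / c$i$j)"

lemma cone_K_Lmap: "cone_K c = {Lmap c w w' | w w'. (\<forall>i. 0 \<le> w$i) \<and> (\<forall>j. 0 \<le> w'$j)}"
  by (auto simp: cone_K_def Lmap_def)

lemma cnorm_entry:
  fixes x :: "real^'n::finite^'n"
  assumes "\<forall>i j. 0 < c$i$j"
  shows "c$i$j * (x$i$j)^2 \<le> (cnorm c x)^2"
proof -
  have "c$i$j * (x$i$j)^2 \<le> (\<Sum>j\<in>UNIV. c$i$j * (x$i$j)^2)"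
    by (rule member_le_sum) (use assms in \<open>auto intro!: mult_nonneg_nonneg simp: less_imp_le\<close>)
  also have "\<dots> \<le> (\<Sum>i\<in>UNIV. \<Sum>j\<in>UNIV. c$i$j * (x$i$j)^2)"
    by (rule member_le_sum[where f="\<lambda>i. \<Sum>j\<in>UNIV. c$i$j * (x$i$j)^2"])
       (use assms in \<open>auto intro!: sum_nonneg mult_nonneg_nonneg simp: less_imp_le\<close>)
  also have "\<dots> = (cnorm c x)^2"
  proof -
    have "0 \<le> c$i$j * x$i$j * x$i$j" for i j
      by (metis assms less_imp_le mult.assoc mult_nonneg_nonneg zero_le_square)
    then have "0 \<le> cinner c x x" unfolding cinner_def by (auto intro!: sum_nonneg)
    then show ?thesis by (simp add: cnorm_def cinner_def power2_eq_square mult.assoc)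
  qed
  finally show ?thesis .
qed

lemma proj_ex:
  fixes c :: "real^'n::finite^'n"
  assumes cpos: "\<forall>i j. 0 < c$i$j"
  shows "\<exists>y\<in>cone_K c. \<forall>z\<in>cone_K c. cnorm c (x - y) \<le> cnorm c (x - z)"
proof -
  define B where "B = 2 * cnorm c x"
  define R where "R = B * (\<Sum>i\<in>UNIV. \<Sum>j\<in>UNIV. sqrt (c$i$j))"
  define box :: "(real^'n) set" where "box = cbox 0 (\<chi> i. R)"
  define S where "S = box \<times> box"
  define f where "f = (\<lambda>p::(real^'n) \<times> (real^'n). cnorm c (x - Lmap c (fst p) (snd p)))"
  have Rnn: "0 \<le> R" unfolding R_def B_def by (intro mult_nonneg_nonneg sum_nonneg) (use cpos in \<open>auto simp: cnorm_nonneg[OF cpos] less_imp_le\<close>)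
  have "compact S" unfolding S_def box_def by (intro compact_Times compact_cbox)
  moreover have "S \<noteq> {}" unfolding S_def box_def using Rnn
    by (auto simp: interval_cart intro!: exI[of _ "0::real^'n"])
  moreover have "continuous_on S f"
    unfolding f_def cnorm_sqm[OF cpos] sqm_def Lmap_def by (intro continuous_intros) (use cpos in \<open>auto simp: dual_order.strict_implies_not_eq\<close>)
  ultimately obtain p where pS: "p \<in> S" and pmin: "\<forall>q\<in>S. f p \<le> f q"
    using continuous_attains_inf by blast
  have pK: "Lmap c (fst p) (snd p) \<in> cone_K c"
  proof -
    have "\<forall>i. 0 \<le> fst p $ i" "\<forall>i. 0 \<le> snd p $ i"
      using pS unfolding S_def box_def by (auto simp: interval_cart mem_Times_iff)
    then show ?thesis unfolding cone_K_Lmap by blast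
  qed
  have "(0::real^'n, 0::real^'n) \<in> S" unfolding S_def box_def using Rnn by (auto simp: interval_cart)
  then have "f p \<le> f (0,0)" using pmin by blast
  moreover have "Lmap c 0 0 = 0" by (simp add: Lmap_def vec_eq_iff)
  ultimately have fp0: "f p \<le> cnorm c x" by (simp add: f_def)
  show ?thesis
  proof (intro bexI[OF _ pK] ballI)
    fix z assume "z \<in> cone_K c"
    then obtain w w' where ww: "\<forall>i. 0 \<le> w$i" "\<forall>j. 0 \<le> w'$j" "z = Lmap c w w'"
      unfolding cone_K_Lmap by blast
    show "cnorm c (x - Lmap c (fst p) (snd p)) \<le> cnorm c (x - z)"
    proof (cases "cnorm c (x - z) \<le> cnorm c x")
      case False then show ?thesis using fp0 by (simp add: f_def)
    next
      case True
      have "cnorm c z \<le> cnorm c x + cnorm c (x - z)"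
        using cnorm_triangle[OF cpos, of x "z - x"] cnorm_minus[OF cpos, of x z] by simp
      then have zB: "cnorm c z \<le> B" using True by (simp add: B_def)
      have wle: "w$i + w'$j \<le> B * sqrt (c$i$j)" for i j
      proof -
        have cij: "0 < c$i$j" using cpos by simp
        have zij: "z$i$j = (w$i + w'$j) / c$i$j" using ww(3) by (simp add: Lmap_def)
        have "c$i$j * (z$i$j)^2 \<le> B^2"
          using cnorm_entry[OF cpos, of i j z] zB cnorm_nonneg[OF cpos, of z]
          by (smt (verit) power_mono)
        then have "c$i$j * (w$i + w'$j)^2 \<le> B^2 * (c$i$j)^2"
          using cij by (simp add: zij power_divide power_mult_distrib field_simps)
        then have "c$i$j * (w$i + w'$j)^2 \<le> c$i$j * (B^2 * c$i$j)"
          by (simp add: power2_eq_square algebra_simps)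
        then have "(w$i + w'$j)^2 \<le> B^2 * c$i$j" using cij by (rule mult_left_le_imp_le)
        then have "(w$i + w'$j)^2 \<le> (B * sqrt (c$i$j))^2"
          using cij by (simp add: power_mult_distrib)
        moreover have "0 \<le> B * sqrt (c$i$j)" using cij by (simp add: B_def cnorm_nonneg[OF cpos])
        ultimately show ?thesis by (rule power2_le_imp_le)
      qed
      have sle: "B * sqrt (c$i$j) \<le> R" for i j
      proof -
        have "sqrt (c$i$j) \<le> (\<Sum>j\<in>UNIV. sqrt (c$i$j))"
          by (rule member_le_sum) (use cpos in \<open>auto simp: less_imp_le\<close>)
        also have "\<dots> \<le> (\<Sum>i\<in>UNIV. \<Sum>j\<in>UNIV. sqrt (c$i$j))"
          by (rule member_le_sum[where f="\<lambda>i. \<Sum>j\<in>UNIV. sqrt (c$i$j)"]) (use cpos in \<open>auto intro!: sum_nonneg simp: less_imp_le\<close>)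
        finally show ?thesis unfolding R_def by (intro mult_left_mono) (auto simp: B_def cnorm_nonneg[OF cpos])
      qed
      obtain j0 :: 'n where True by blast
      have "w$i \<le> R" for i using wle[of i j0] sle[of i j0] ww(2) by smt
      moreover have "w'$j \<le> R" for j using wle[of j0 j] sle[of j0 j] ww(1) by smt
      ultimately have "(w, w') \<in> S" using ww unfolding S_def box_def by (auto simp: interval_cart)
      then show ?thesis using pmin ww(3) by (auto simp: f_def)
    qed
  qed
qed

lemma proj_K_prop:
  fixes c :: "real^'n::finite^'n"
  assumes cpos: "\<forall>i j. 0 < c$i$j"
  shows "proj_K c x \<in> cone_K c" "\<And>z. z \<in> cone_K c \<Longrightarrow> cnorm c (perp_K c x) \<le> cnorm c (x - z)"
proof -
  have "\<exists>y. y \<in> cone_K c \<and> (\<forall>z\<in>cone_K c. cnorm c (x - y) \<le> cnorm c (x - z))"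
    using proj_ex[OF cpos] by blast
  then have h: "proj_K c x \<in> cone_K c \<and> (\<forall>z\<in>cone_K c. cnorm c (x - proj_K c x) \<le> cnorm c (x - z))"
    unfolding proj_K_def by (rule someI_ex)
  then show "proj_K c x \<in> cone_K c" by blast
  show "\<And>z. z \<in> cone_K c \<Longrightarrow> cnorm c (perp_K c x) \<le> cnorm c (x - z)"
    using h by (simp add: perp_K_def)
qed

lemma perp_lipschitz:
  fixes c :: "real^'n::finite^'n"
  assumes cpos: "\<forall>i j. 0 < c$i$j"
  shows "cnorm c (perp_K c x) \<le> cnorm c (x - y) + cnorm c (perp_K c y)"
proof -
  have "cnorm c (perp_K c x) \<le> cnorm c (x - proj_K c y)"
    by (rule proj_K_prop(2)[OF cpos proj_K_prop(1)[OF cpos]])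
  also have "\<dots> = cnorm c ((x - y) + perp_K c y)" by (simp add: perp_K_def)
  also have "\<dots> \<le> cnorm c (x - y) + cnorm c (perp_K c y)" by (rule cnorm_triangle[OF cpos])
  finally show ?thesis .
qed

lemma cone_K_nonneg:
  assumes "\<forall>i j. 0 < c$i$j" "p \<in> cone_K c" shows "0 \<le> p$i$j"
  using assms by (auto simp: cone_K_def intro!: divide_nonneg_pos add_nonneg_nonneg)


definition pmat :: "('n \<Rightarrow> 'n) \<Rightarrow> real^'n^'n" where
  "pmat p = (\<chi> i j. if p i = j then 1 else 0)"

lemma perm_matrices_pmat: "perm_matrices = pmat ` {p. p permutes UNIV}"
  by (auto simp: perm_matrices_def pmat_def)

lemma col_count:
  fixes p :: "'n::finite \<Rightarrow> 'n"
  assumes "p permutes UNIV"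
  shows "(\<Sum>i\<in>UNIV. (if p i = j then 1 else 0::real)) = 1"
proof -
  have "(\<Sum>i\<in>UNIV. (if p i = j then 1 else 0::real)) = (\<Sum>i\<in>UNIV. (if i = inv p j then 1 else 0::real))"
    by (intro sum.cong refl) (metis permutes_inv_eq[OF assms])
  then show ?thesis by simp
qed

lemma pmat_ds:
  fixes p :: "'n::finite \<Rightarrow> 'n"
  assumes "p permutes UNIV" shows "pmat p \<in> doubly_stochastic"
  using col_count[OF assms] by (simp add: doubly_stochastic_def pmat_def)

lemma nu_pos:
  fixes \<nu> :: "real^'n::finite^'n"
  assumes "\<nu> \<in> rel_interior doubly_stochastic"
  shows "0 < \<nu>$i$j"
proof (rule ccontr)
  assume neg: "\<not> 0 < \<nu>$i$j"
  obtain e where e: "e > 0" "ball \<nu> e \<inter> affine hull doubly_stochastic \<subseteq> doubly_stochastic"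
    and nuF: "\<nu> \<in> doubly_stochastic"
    using assms unfolding mem_rel_interior_ball by blast
  define P where "P = pmat (Transposition.transpose i j)"
  have PF: "P \<in> doubly_stochastic" unfolding P_def by (rule pmat_ds) (simp add: permutes_swap_id)
  have Pij: "P$i$j = 1" by (simp add: P_def pmat_def)
  define t where "t = e / (2 * (norm (\<nu> - P) + 1))"
  have tpos: "0 < t" using e by (simp add: t_def add_nonneg_pos)
  define z where "z = (1 + t) *\<^sub>R \<nu> + (- t) *\<^sub>R P"
  have "z \<in> affine hull doubly_stochastic"
    unfolding z_def by (rule mem_affine) (use nuF PF in \<open>auto intro: hull_inc\<close>)
  moreover have "z \<in> ball \<nu> e"
  proof -
    have "\<nu> - z = t *\<^sub>R (P - \<nu>)" by (simp add: z_def algebra_simps)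
    then have "dist \<nu> z = norm (t *\<^sub>R (\<nu> - P))"
      by (simp add: dist_norm norm_minus_commute)
    also have "\<dots> = t * norm (\<nu> - P)" using tpos by simp
    also have "\<dots> < e"
    proof -
      have "t * norm (\<nu> - P) \<le> t * (norm (\<nu> - P) + 1)" using tpos by simp
      also have "\<dots> = e / 2"
      proof -
        have a1: "norm (\<nu> - P) + 1 \<noteq> 0" by (smt (verit) norm_ge_zero)
        have a2: "2 * norm (\<nu> - P) + 2 \<noteq> 0" using a1 by simp
        show ?thesis unfolding t_def using a1 a2 by (simp add: field_simps)
      qed
      finally show ?thesis using e by simp
    qed
    finally show ?thesis by simp
  qed
  ultimately have "z \<in> doubly_stochastic" using e by blast
  moreover have "z$i$j < 0"
  proof -
    have "\<nu>$i$j = 0" using neg ds_nonneg[OF nuF, of i j] by simp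
    then show ?thesis using tpos Pij by (simp add: z_def)
  qed
  ultimately show False using ds_nonneg[of z i j] by linarith
qed

definition Xp :: "real^'n^'n \<Rightarrow> ('n \<Rightarrow> 'n) \<Rightarrow> real" where
  "Xp X p = (\<Sum>i\<in>UNIV. X$i$(p i))"

definition dsum :: "real^'n^'n \<Rightarrow> real^'n^'n \<Rightarrow> real" where
  "dsum X x = (\<Sum>i\<in>UNIV. \<Sum>j\<in>UNIV. X$i$j * x$i$j)"

lemma eta_exists:
  fixes \<nu> :: "real^'n::finite^'n"
  assumes "\<nu> \<in> doubly_stochastic" "\<And>i j. 0 < \<nu>$i$j"
  shows "\<exists>\<eta>. 0 < \<eta> \<and> \<eta> < 1 \<and> (\<forall>i j. \<eta> \<le> \<nu>$i$j)"
proof -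
  define S where "S = (\<lambda>q. \<nu> $ fst q $ snd q) ` (UNIV :: ('n \<times> 'n) set)"
  define m where "m = Min S"
  have "finite S" "S \<noteq> {}" by (auto simp: S_def)
  then have "m \<in> S" unfolding m_def by (rule Min_in)
  then have mpos: "0 < m" using assms(2) by (auto simp: S_def)
  have mle: "m \<le> \<nu>$i$j" for i j
  proof -
    have "\<nu>$i$j \<in> S" unfolding S_def by (rule image_eqI[where x="(i,j)"]) auto
    then show ?thesis unfolding m_def using \<open>finite S\<close> by simp
  qed
  obtain i j :: 'n where True by blast
  have "m \<le> 1" using mle[of i j] ds_le1[OF assms(1), of i j] by simp
  moreover have "m/2 \<le> \<nu>$i$j" for i j using mle[of i j] mpos by linarith
  ultimately show ?thesis using mpos by (intro exI[of _ "m/2"]) auto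
qed

lemma gap_bound:
  fixes \<nu> X :: "real^'n::finite^'n"
  assumes nuF: "\<nu> \<in> doubly_stochastic" and eta: "0 < \<eta>" "\<eta> < 1" "\<And>i j. \<eta> \<le> \<nu>$i$j"
    and Mub: "\<And>p. p permutes UNIV \<Longrightarrow> Xp X p \<le> M"
    and p0: "p0 permutes UNIV"
  shows "M - Xp X p0 \<le> (card {p. p permutes (UNIV::'n set)} / \<eta>) * (M - dsum X \<nu>)"
proof -
  define Perms where "Perms = {p. p permutes (UNIV::'n set)}"
  define N where "N = card Perms"
  have finP: "finite Perms" unfolding Perms_def by (rule finite_permutations) simp
  have Npos: "0 < N" unfolding N_def using finP by (auto simp: card_gt_0_iff Perms_def intro!: exI[of _ id])
  define U :: "real^'n^'n" where "U = (\<chi> i j. (\<Sum>p\<in>Perms. (if p i = j then 1 else 0)) / N)"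
  have Uij: "U$i$j = (\<Sum>p\<in>Perms. (if p i = j then 1 else 0)) / N" for i j by (simp add: U_def)
  have Ule: "U$i$j \<le> 1" for i j
  proof -
    have "(\<Sum>p\<in>Perms. (if p i = j then 1 else 0::real)) \<le> (\<Sum>p\<in>Perms. 1)"
      by (intro sum_mono) auto
    then show ?thesis using Npos by (simp add: Uij N_def)
  qed
  have Unn: "0 \<le> U$i$j" for i j by (simp add: Uij sum_nonneg)
  have Urow: "(\<Sum>j\<in>UNIV. U$i$j) = 1" for i
  proof -
    have "(\<Sum>j\<in>UNIV. U$i$j) = (\<Sum>j\<in>UNIV. \<Sum>p\<in>Perms. (if p i = j then 1 else 0)) / N"
      by (simp add: Uij sum_divide_distrib)
    also have "\<dots> = (\<Sum>p\<in>Perms. \<Sum>j\<in>UNIV. (if p i = j then 1 else 0)) / N"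
      by (subst sum.swap) simp
    also have "\<dots> = 1" using Npos finP by (simp add: N_def card_gt_0_iff)
    finally show ?thesis .
  qed
  have Ucol: "(\<Sum>i\<in>UNIV. U$i$j) = 1" for j
  proof -
    have "(\<Sum>i\<in>UNIV. U$i$j) = (\<Sum>i\<in>UNIV. \<Sum>p\<in>Perms. (if p i = j then 1 else 0)) / N"
      by (simp add: Uij sum_divide_distrib)
    also have "\<dots> = (\<Sum>p\<in>Perms. \<Sum>i\<in>UNIV. (if p i = j then 1 else 0)) / N"
      by (subst sum.swap) simp
    also have "\<dots> = (\<Sum>p\<in>Perms. 1) / N"
      by (intro arg_cong[where f="\<lambda>a. a / real N"] sum.cong refl) (simp add: Perms_def col_count)
    also have "\<dots> = 1" using Npos finP by (simp add: N_def card_gt_0_iff)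
    finally show ?thesis .
  qed
  have dsU: "dsum X U = (\<Sum>p\<in>Perms. Xp X p) / N"
  proof -
    have "dsum X U = (\<Sum>i\<in>UNIV. \<Sum>j\<in>UNIV. \<Sum>p\<in>Perms. X$i$j * (if p i = j then 1 else 0)) / N"
      by (simp add: dsum_def Uij sum_divide_distrib[symmetric] sum_distrib_left)
    also have "\<dots> = (\<Sum>p\<in>Perms. \<Sum>i\<in>UNIV. \<Sum>j\<in>UNIV. X$i$j * (if p i = j then 1 else 0)) / N"
      by (simp add: sum.swap[where A=Perms])
    also have "\<dots> = (\<Sum>p\<in>Perms. Xp X p) / N"
    proof -
      have "(\<Sum>j\<in>UNIV. X$i$j * (if p i = j then 1 else 0)) = X$i$(p i)" for p i
      proof -
        have "(\<Sum>j\<in>UNIV. X$i$j * (if p i = j then 1 else 0)) = (\<Sum>j\<in>UNIV. if p i = j then X$i$j else 0)"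
          by (intro sum.cong) auto
        then show ?thesis by simp
      qed
      then show ?thesis by (simp add: Xp_def)
    qed
    finally show ?thesis .
  qed
  define \<nu>2 :: "real^'n^'n" where "\<nu>2 = (\<chi> i j. (\<nu>$i$j - \<eta> * U$i$j) / (1 - \<eta>))"
  have n2ij: "\<nu>2$i$j = (\<nu>$i$j - \<eta> * U$i$j) / (1 - \<eta>)" for i j by (simp add: \<nu>2_def)
  have "\<nu>2 \<in> doubly_stochastic"
  proof -
    have "0 \<le> \<nu>2$i$j" for i j
    proof -
      have "\<eta> * U$i$j \<le> \<eta> * 1" using Ule[of i j] eta by (intro mult_left_mono) auto
      then show ?thesis using eta(3)[of i j] eta(2) by (simp add: n2ij)
    qed
    moreover have "(\<Sum>j\<in>UNIV. \<nu>2$i$j) = 1" for i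
      using ds_row[OF nuF, of i] Urow[of i] eta(2)
      by (simp add: n2ij sum_divide_distrib[symmetric] sum_subtractf sum_distrib_left[symmetric])
    moreover have "(\<Sum>i\<in>UNIV. \<nu>2$i$j) = 1" for j
      using ds_col[OF nuF, of j] Ucol[of j] eta(2)
      by (simp add: n2ij sum_divide_distrib[symmetric] sum_subtractf sum_distrib_left[symmetric])
    ultimately show ?thesis by (simp add: doubly_stochastic_def)
  qed
  then obtain q where q: "q permutes UNIV" "dsum X \<nu>2 \<le> Xp X q"
    using birkhoff_ineq[where x=\<nu>2 and X=X] by (auto simp: dsum_def Xp_def)
  have split: "dsum X \<nu> = (1 - \<eta>) * dsum X \<nu>2 + \<eta> * dsum X U"
  proof -
    have h: "\<nu>$i$j = (1 - \<eta>) * \<nu>2$i$j + \<eta> * U$i$j" for i j using eta(2) by (simp add: n2ij)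
    have "X$i$j * \<nu>$i$j = (1 - \<eta>) * (X$i$j * \<nu>2$i$j) + \<eta> * (X$i$j * U$i$j)" for i j
      by (subst h) (simp add: algebra_simps)
    then have "dsum X \<nu> = (\<Sum>i\<in>UNIV. \<Sum>j\<in>UNIV. (1 - \<eta>) * (X$i$j * \<nu>2$i$j) + \<eta> * (X$i$j * U$i$j))"
      by (simp add: dsum_def)
    then show ?thesis
      by (simp add: dsum_def sum.distrib sum_distrib_left)
  qed
  have "dsum X \<nu> \<le> (1 - \<eta>) * M + \<eta> * ((\<Sum>p\<in>Perms. Xp X p) / N)"
  proof -
    have "(1 - \<eta>) * dsum X \<nu>2 \<le> (1 - \<eta>) * M"
      using q Mub[OF q(1)] eta(2) by (intro mult_left_mono) auto
    then show ?thesis using split dsU by simp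
  qed
  then have "\<eta> * (M - (\<Sum>p\<in>Perms. Xp X p) / N) \<le> M - dsum X \<nu>" by (simp add: algebra_simps)
  moreover have "M - (\<Sum>p\<in>Perms. Xp X p) / N = (\<Sum>p\<in>Perms. M - Xp X p) / N"
    using Npos finP by (simp add: sum_subtractf N_def diff_divide_distrib card_gt_0_iff)
  moreover have "M - Xp X p0 \<le> (\<Sum>p\<in>Perms. M - Xp X p)"
    by (rule member_le_sum) (use p0 Mub in \<open>auto simp: Perms_def\<close>)
  ultimately have "\<eta> * ((M - Xp X p0) / N) \<le> M - dsum X \<nu>"
    using eta Npos by (smt (verit) divide_right_mono mult_left_mono of_nat_0_le_iff)
  then show ?thesis using eta Npos unfolding Perms_def[symmetric] N_def[symmetric]
    by (simp add: field_simps)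
qed


lemma sum_two_points:
  fixes f :: "'n::finite \<Rightarrow> real"
  assumes "\<And>k. k \<noteq> a \<Longrightarrow> k \<noteq> b \<Longrightarrow> f k = 0" "a \<noteq> b"
  shows "sum f UNIV = f a + f b"
proof -
  have "sum f UNIV = sum f {a,b} + sum f (UNIV - {a,b})"
    by (subst sum.subset_diff[where B="{a,b}"]) auto
  also have "sum f (UNIV - {a,b}) = 0" using assms(1) by (intro sum.neutral) auto
  finally show ?thesis using assms(2) by simp
qed

lemma defect:
  fixes X :: "real^'n::finite^'n"
  assumes bound: "\<And>p. p permutes UNIV \<Longrightarrow> M - Xp X p \<le> T"
    and ub: "\<And>p. p permutes UNIV \<Longrightarrow> Xp X p \<le> M"
  shows "\<bar>X$i$j + X$i0$j0 - X$i$j0 - X$i0$j\<bar> \<le> T"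
proof -
  have T0: "0 \<le> T" using bound[of id] ub[of id] by simp
  show ?thesis
  proof (cases "i = i0 \<or> j = j0")
    case True then show ?thesis using T0 by auto
  next
    case False
    then have ii: "i \<noteq> i0" and jj: "j \<noteq> j0" by auto
    define p1 where "p1 = Transposition.transpose i j"
    define \<sigma> where "\<sigma> = Transposition.transpose (p1 i0) j0 \<circ> p1"
    define \<sigma>' where "\<sigma>' = Transposition.transpose j j0 \<circ> \<sigma>"
    have p1p: "p1 permutes UNIV" unfolding p1_def by (simp add: permutes_swap_id)
    have sp: "\<sigma> permutes UNIV" unfolding \<sigma>_def by (intro permutes_compose p1p permutes_swap_id) auto
    have sp': "\<sigma>' permutes UNIV" unfolding \<sigma>'_def by (intro permutes_compose sp permutes_swap_id) auto
    have p1i: "p1 i = j" by (simp add: p1_def)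
    have "p1 i0 \<noteq> p1 i" using ii permutes_inj[OF p1p] by (auto dest: injD)
    then have neq: "p1 i0 \<noteq> j" using p1i by simp
    have si: "\<sigma> i = j" using neq jj by (simp add: \<sigma>_def p1i transpose_apply_other)
    have si0: "\<sigma> i0 = j0" by (simp add: \<sigma>_def)
    have s'i: "\<sigma>' i = j0" by (simp add: \<sigma>'_def si)
    have s'i0: "\<sigma>' i0 = j" by (simp add: \<sigma>'_def si0)
    have other: "\<sigma>' k = \<sigma> k" if "k \<noteq> i" "k \<noteq> i0" for k
    proof -
      have "\<sigma> k \<noteq> j" using that si permutes_inj[OF sp] by (auto dest: injD)
      moreover have "\<sigma> k \<noteq> j0" using that si0 permutes_inj[OF sp] by (auto dest: injD)
      ultimately show ?thesis by (simp add: \<sigma>'_def transpose_apply_other)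
    qed
    have "Xp X \<sigma> - Xp X \<sigma>' = (\<Sum>k\<in>UNIV. X$k$(\<sigma> k) - X$k$(\<sigma>' k))"
      by (simp add: Xp_def sum_subtractf)
    also have "\<dots> = (X$i$(\<sigma> i) - X$i$(\<sigma>' i)) + (X$i0$(\<sigma> i0) - X$i0$(\<sigma>' i0))"
      by (rule sum_two_points) (use other ii in auto)
    also have "\<dots> = X$i$j + X$i0$j0 - X$i$j0 - X$i0$j" by (simp add: si si0 s'i s'i0)
    finally have eq: "Xp X \<sigma> - Xp X \<sigma>' = X$i$j + X$i0$j0 - X$i$j0 - X$i0$j" .
    show ?thesis using bound[OF sp] bound[OF sp'] ub[OF sp] ub[OF sp'] eq by linarith
  qed
qed

lemma approx:
  fixes X :: "real^'n::finite^'n"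
  assumes nn: "\<And>i j. 0 \<le> X$i$j" and D: "\<And>i j. \<bar>X$i$j + X$i0$j0 - X$i$j0 - X$i0$j\<bar> \<le> T"
  shows "\<exists>w w' :: real^'n. (\<forall>i. 0 \<le> w$i) \<and> (\<forall>j. 0 \<le> w'$j) \<and> (\<forall>i j. \<bar>X$i$j - w$i - w'$j\<bar> \<le> 2*T)"
proof -
  define a where "a = (\<lambda>k. X$k$j0)"
  define b where "b = (\<lambda>l. X$i0$l - X$i0$j0)"
  define \<alpha> where "\<alpha> = Min (range a)"
  define \<beta> where "\<beta> = Min (range b)"
  have "\<alpha> \<in> range a" unfolding \<alpha>_def by (rule Min_in) auto
  then obtain k1 where k1: "a k1 = \<alpha>" by auto
  have "\<beta> \<in> range b" unfolding \<beta>_def by (rule Min_in) auto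
  then obtain l1 where l1: "b l1 = \<beta>" by auto
  have ale: "\<alpha> \<le> a k" for k unfolding \<alpha>_def by (rule Min_le) auto
  have ble: "\<beta> \<le> b l" for l unfolding \<beta>_def by (rule Min_le) auto
  have ab: "- T \<le> \<alpha> + \<beta>"
    using D[of k1 l1] nn[of k1 l1] k1 l1 by (simp add: a_def b_def abs_le_iff)
  define w :: "real^'n" where "w = (\<chi> k. a k - \<alpha>)"
  define w' :: "real^'n" where "w' = (\<chi> l. max 0 (b l + \<alpha>))"
  have "\<bar>X$i$j - w$i - w'$j\<bar> \<le> 2*T" for i j
  proof -
    have e1: "\<bar>X$i$j - a i - b j\<bar> \<le> T" using D[of i j] by (simp add: a_def b_def algebra_simps)
    have T0: "0 \<le> T" using D[of i0 j0] by simp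
    have "- T \<le> b j + \<alpha>" using ab ble[of j] by simp
    then have e2: "\<bar>(b j + \<alpha>) - max 0 (b j + \<alpha>)\<bar> \<le> T" using T0 by (simp add: max_def abs_le_iff)
    have "X$i$j - w$i - w'$j = (X$i$j - a i - b j) + ((b j + \<alpha>) - max 0 (b j + \<alpha>))"
      by (simp add: w_def w'_def)
    then show ?thesis using e1 e2 by linarith
  qed
  moreover have "\<forall>i. 0 \<le> w$i" using ale by (simp add: w_def)
  moreover have "\<forall>j. 0 \<le> w'$j" by (simp add: w'_def)
  ultimately show ?thesis by blast
qed

lemma vbound:
  fixes c Q :: "real^'n::finite^'n" and w w' :: "real^'n"
  assumes cpos: "\<forall>i j. 0 < c$i$j" and nw: "\<forall>i. 0 \<le> w$i" "\<forall>j. 0 \<le> w'$j"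
    and B: "\<And>i j. \<bar>c$i$j * Q$i$j - w$i - w'$j\<bar> \<le> B"
  shows "cnorm c (perp_K c Q) \<le> B * sqrt (\<Sum>i\<in>UNIV. \<Sum>j\<in>UNIV. 1 / c$i$j)"
proof -
  obtain i j :: 'n where True by blast
  have B0: "0 \<le> B" using B[of i j] by linarith
  define y where "y = Lmap c w w'"
  have yK: "y \<in> cone_K c" unfolding y_def cone_K_Lmap using nw by blast
  have "cinner c (Q - y) (Q - y) \<le> (\<Sum>i\<in>UNIV. \<Sum>j\<in>UNIV. B^2 * (1 / c$i$j))"
    unfolding cinner_def
  proof (intro sum_mono)
    fix i j
    have cij: "0 < c$i$j" using cpos by simp
    have d: "(Q - y)$i$j = (c$i$j * Q$i$j - w$i - w'$j) / c$i$j"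
      using cij by (simp add: y_def Lmap_def field_simps)
    have sq: "c * (z / c) * (z / c) = z^2 / c" if "0 < c" for c z :: real
      using that by (simp add: power2_eq_square)
    have "c$i$j * (Q - y)$i$j * (Q - y)$i$j = (c$i$j * Q$i$j - w$i - w'$j)^2 / c$i$j"
      unfolding d by (rule sq[OF cij])
    also have "\<dots> \<le> B^2 / c$i$j"
    proof (intro divide_right_mono)
      show "(c$i$j * Q$i$j - w$i - w'$j)^2 \<le> B^2"
        using power_mono[OF B[of i j] abs_ge_zero, of 2] by simp
    qed (use cij in simp)
    finally show "c$i$j * (Q - y)$i$j * (Q - y)$i$j \<le> B^2 * (1 / c$i$j)" by simp
  qed
  also have "\<dots> = B^2 * (\<Sum>i\<in>UNIV. \<Sum>j\<in>UNIV. 1 / c$i$j)" by (simp add: sum_distrib_left)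
  finally have "cnorm c (Q - y) \<le> sqrt (B^2 * (\<Sum>i\<in>UNIV. \<Sum>j\<in>UNIV. 1 / c$i$j))"
    unfolding cnorm_def by (rule real_sqrt_le_mono)
  also have "\<dots> = B * sqrt (\<Sum>i\<in>UNIV. \<Sum>j\<in>UNIV. 1 / c$i$j)" using B0 by (simp add: real_sqrt_mult)
  finally show ?thesis using proj_K_prop(2)[OF cpos yK, of Q] by linarith
qed

lemma cinner_pmat: "cinner c Q (pmat p) = Xp (\<chi> i j. c$i$j * Q$i$j) p"
proof -
  have "(\<Sum>j\<in>UNIV. c$i$j * Q$i$j * (if p i = j then 1 else 0)) = c$i$(p i) * Q$i$(p i)" for i
  proof -
    have "(\<Sum>j\<in>UNIV. c$i$j * Q$i$j * (if p i = j then 1 else 0)) = (\<Sum>j\<in>UNIV. if p i = j then c$i$j * Q$i$j else 0)"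
      by (intro sum.cong) auto
    then show ?thesis by simp
  qed
  then show ?thesis by (simp add: cinner_def pmat_def Xp_def)
qed

lemma cinner_dsum: "cinner c Q s = dsum (\<chi> i j. c$i$j * Q$i$j) s"
  by (simp add: cinner_def dsum_def)

definition Kc :: "real^'n^'n \<Rightarrow> real \<Rightarrow> real" where
  "Kc c \<eta> = 2 * (card {p. p permutes (UNIV::'n set)} / \<eta>) * sqrt (\<Sum>i\<in>UNIV. \<Sum>j\<in>UNIV. 1 / c$i$j)"

lemma key:
  fixes c \<nu> Q :: "real^'n::finite^'n"
  assumes cpos: "\<forall>i j. 0 < c$i$j" and nuF: "\<nu> \<in> doubly_stochastic"
    and eta: "0 < \<eta>" "\<eta> < 1" "\<And>i j. \<eta> \<le> \<nu>$i$j"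
    and Qnn: "\<And>i j. 0 \<le> Q$i$j"
    and ub: "\<And>p. p permutes UNIV \<Longrightarrow> cinner c Q (pmat p) \<le> M"
  shows "cnorm c (perp_K c Q) \<le> Kc c \<eta> * (M - cinner c Q \<nu>)"
proof -
  define X where "X = (\<chi> i j. c$i$j * Q$i$j)"
  define T where "T = (card {p. p permutes (UNIV::'n set)} / \<eta>) * (M - dsum X \<nu>)"
  have ub': "\<And>p. p permutes UNIV \<Longrightarrow> Xp X p \<le> M" using ub by (simp add: cinner_pmat X_def)
  have bd: "\<And>p. p permutes UNIV \<Longrightarrow> M - Xp X p \<le> T"
    unfolding T_def by (rule gap_bound[OF nuF eta ub']) auto
  obtain i0 j0 :: 'n where True by blast
  have Xnn: "0 \<le> X$i$j" for i j using cpos Qnn[of i j] by (simp add: X_def less_imp_le)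
  obtain w w' :: "real^'n" where ww: "\<forall>i. 0 \<le> w$i" "\<forall>j. 0 \<le> w'$j" "\<forall>i j. \<bar>X$i$j - w$i - w'$j\<bar> \<le> 2*T"
    using approx[of X i0 j0 T, OF Xnn defect[OF bd ub']] by blast
  have "cnorm c (perp_K c Q) \<le> (2*T) * sqrt (\<Sum>i\<in>UNIV. \<Sum>j\<in>UNIV. 1 / c$i$j)"
    by (rule vbound[OF cpos ww(1,2)]) (use ww(3) in \<open>simp add: X_def\<close>)
  also have "\<dots> = Kc c \<eta> * (M - cinner c Q \<nu>)"
    by (simp add: T_def Kc_def cinner_dsum X_def)
  finally show ?thesis .
qed


lemma stationary:
  fixes qd :: "nat \<Rightarrow> 'a pmf" and P :: "'a \<Rightarrow> 'a pmf"
  assumes conv: "\<And>x. (\<lambda>t. pmf (qd t) x) \<longlonglongrightarrow> pmf \<pi> x"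
    and step: "\<And>t. qd (Suc t) = bind_pmf (qd t) P"
  shows "bind_pmf \<pi> P = \<pi>"
proof -
  have le: "pmf (bind_pmf \<pi> P) x \<le> pmf \<pi> x" for x
  proof -
    have "ennreal (pmf (bind_pmf \<pi> P) x) = (\<integral>\<^sup>+y. ennreal (pmf \<pi> y * pmf (P y) x) \<partial>count_space UNIV)"
      by (simp add: ennreal_pmf_bind nn_integral_measure_pmf ennreal_mult)
    also have "\<dots> = (\<integral>\<^sup>+y. liminf (\<lambda>t. ennreal (pmf (qd t) y * pmf (P y) x)) \<partial>count_space UNIV)"
    proof (intro nn_integral_cong)
      fix y
      have "(\<lambda>t. ennreal (pmf (qd t) y * pmf (P y) x)) \<longlonglongrightarrow> ennreal (pmf \<pi> y * pmf (P y) x)"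
        by (intro tendsto_ennrealI tendsto_mult conv tendsto_const)
      then show "ennreal (pmf \<pi> y * pmf (P y) x) = liminf (\<lambda>t. ennreal (pmf (qd t) y * pmf (P y) x))"
        by (rule lim_imp_Liminf[OF trivial_limit_sequentially, symmetric])
    qed
    also have "\<dots> \<le> liminf (\<lambda>t. \<integral>\<^sup>+y. ennreal (pmf (qd t) y * pmf (P y) x) \<partial>count_space UNIV)"
      by (rule nn_integral_liminf) simp
    also have "\<dots> = liminf (\<lambda>t. ennreal (pmf (qd (Suc t)) x))"
      by (simp add: step ennreal_pmf_bind nn_integral_measure_pmf ennreal_mult)
    also have "\<dots> = ennreal (pmf \<pi> x)"
    proof -
      have "(\<lambda>t. ennreal (pmf (qd (Suc t)) x)) \<longlonglongrightarrow> ennreal (pmf \<pi> x)"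
        using tendsto_ennrealI[OF LIMSEQ_Suc[OF conv[of x]]] by simp
      then show ?thesis by (rule lim_imp_Liminf[OF trivial_limit_sequentially])
    qed
    finally show ?thesis by simp
  qed
  show ?thesis
  proof (rule pmf_eqI)
    fix x
    have "measure (measure_pmf (bind_pmf \<pi> P)) (UNIV - {x}) \<le> measure (measure_pmf \<pi>) (UNIV - {x})"
    proof -
      have "emeasure (measure_pmf (bind_pmf \<pi> P)) (UNIV - {x}) \<le> emeasure (measure_pmf \<pi>) (UNIV - {x})"
        unfolding nn_integral_pmf[symmetric] by (intro nn_integral_mono) (simp add: le)
      then show ?thesis by (simp add: measure_pmf.emeasure_eq_measure)
    qed
    then have "pmf \<pi> x \<le> pmf (bind_pmf \<pi> P) x"
      using measure_pmf.prob_compl[of "{x}" "bind_pmf \<pi> P"] measure_pmf.prob_compl[of "{x}" \<pi>]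
      by (simp add: measure_pmf_single Compl_eq_Diff_UNIV)
    then show "pmf (bind_pmf \<pi> P) x = pmf \<pi> x" using le[of x] by simp
  qed
qed


lemma pow_le_exp:
  fixes x :: real assumes "0 \<le> x" shows "x ^ n / fact n \<le> exp x"
proof -
  have s: "(\<lambda>n. x^n / fact n) sums exp x" using exp_converges[of x] by (simp add: divide_inverse_commute)
  have "sum (\<lambda>n. x^n / fact n) {n} \<le> suminf (\<lambda>n. x^n / fact n)"
    by (rule sum_le_suminf) (use s assms in \<open>auto simp: sums_iff\<close>)
  then show ?thesis using s by (simp add: sums_iff)
qed

lemma exp_drift_moment:
  fixes P :: "'a \<Rightarrow> 'a pmf" and \<pi> :: "'a pmf" and V :: "'a \<Rightarrow> real"
  assumes stat: "bind_pmf \<pi> P = \<pi>"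
    and th: "0 < \<theta>" and rho: "0 \<le> \<rho>" "\<rho> < 1" and C0: "0 \<le> C"
    and dr1: "\<And>x. \<kappa> < V x \<Longrightarrow> (\<integral>\<^sup>+y. ennreal (exp (\<theta> * V y)) \<partial>P x) \<le> ennreal (\<rho> * exp (\<theta> * V x))"
    and dr2: "\<And>x. V x \<le> \<kappa> \<Longrightarrow> (\<integral>\<^sup>+y. ennreal (exp (\<theta> * V y)) \<partial>P x) \<le> ennreal C"
  shows "(\<integral>\<^sup>+x. ennreal (exp (\<theta> * V x)) \<partial>\<pi>) \<le> ennreal (exp (\<theta> * \<kappa>) + C / (1 - \<rho>))"
proof -
  define G where "G = (\<lambda>(N::nat) x. ennreal (exp (\<theta> * V x)) * indicator {y. \<kappa> < V y \<and> V y \<le> real N} x)"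
  have Gb: "(\<integral>\<^sup>+x. G N x \<partial>\<pi>) \<le> ennreal (C / (1 - \<rho>))" for N
  proof -
    define F where "F = (\<lambda>x. ennreal (exp (\<theta> * min (V x) (real N))))"
    have Fle: "F y \<le> ennreal (exp (\<theta> * V y))" for y
      unfolding F_def using th by (intro ennreal_leI) (simp add: mult_left_mono)
    have FleN: "F y \<le> ennreal (exp (\<theta> * real N))" for y
      unfolding F_def using th by (intro ennreal_leI) (simp add: mult_left_mono)
    have pw: "(\<integral>\<^sup>+y. F y \<partial>P x) + ennreal (1 - \<rho>) * G N x \<le> F x + ennreal C" for x
    proof (cases "\<kappa> < V x \<and> V x \<le> real N")
      case True
      have "(\<integral>\<^sup>+y. F y \<partial>P x) \<le> (\<integral>\<^sup>+y. ennreal (exp (\<theta> * V y)) \<partial>P x)"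
        by (intro nn_integral_mono Fle)
      also have "\<dots> \<le> ennreal (\<rho> * exp (\<theta> * V x))" using True dr1 by blast
      finally have "(\<integral>\<^sup>+y. F y \<partial>P x) + ennreal (1 - \<rho>) * G N x
          \<le> ennreal (\<rho> * exp (\<theta> * V x)) + ennreal (1 - \<rho>) * ennreal (exp (\<theta> * V x))"
        using True by (simp add: G_def add_right_mono)
      also have "\<dots> = ennreal (exp (\<theta> * V x))"
        using rho by (simp add: ennreal_mult[symmetric] ennreal_plus[symmetric] algebra_simps del: ennreal_plus)
      also have "\<dots> = F x" using True by (simp add: F_def)
      finally show ?thesis by (simp add: add_increasing2)
    next
      case False
      then have G0: "G N x = 0" by (simp add: G_def)
      show ?thesis
      proof (cases "V x \<le> \<kappa>")
        case True
        have "(\<integral>\<^sup>+y. F y \<partial>P x) \<le> (\<integral>\<^sup>+y. ennreal (exp (\<theta> * V y)) \<partial>P x)"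
          by (intro nn_integral_mono Fle)
        also have "\<dots> \<le> ennreal C" using True dr2 by blast
        finally show ?thesis using G0 by (simp add: add_increasing)
      next
        case False
        then have "real N < V x" using \<open>\<not> (\<kappa> < V x \<and> V x \<le> real N)\<close> by auto
        then have FN: "F x = ennreal (exp (\<theta> * real N))" by (simp add: F_def)
        have "(\<integral>\<^sup>+y. F y \<partial>P x) \<le> (\<integral>\<^sup>+y. ennreal (exp (\<theta> * real N)) \<partial>P x)"
          by (intro nn_integral_mono FleN)
        also have "\<dots> = ennreal (exp (\<theta> * real N))" by (simp add: measure_pmf.emeasure_space_1)
        finally show ?thesis using G0 FN by (simp add: add_increasing2)
      qed
    qed
    have "(\<integral>\<^sup>+x. F x \<partial>\<pi>) + ennreal (1 - \<rho>) * (\<integral>\<^sup>+x. G N x \<partial>\<pi>)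
          = (\<integral>\<^sup>+x. (\<integral>\<^sup>+y. F y \<partial>P x) \<partial>\<pi>) + ennreal (1 - \<rho>) * (\<integral>\<^sup>+x. G N x \<partial>\<pi>)"
    proof -
      have "(\<integral>\<^sup>+x. (\<integral>\<^sup>+y. F y \<partial>P x) \<partial>\<pi>) = (\<integral>\<^sup>+x. F x \<partial>bind_pmf \<pi> P)" by simp
      then show ?thesis by (simp add: stat)
    qed
    also have "\<dots> = (\<integral>\<^sup>+x. (\<integral>\<^sup>+y. F y \<partial>P x) + ennreal (1 - \<rho>) * G N x \<partial>\<pi>)"
      by (simp add: nn_integral_add nn_integral_cmult)
    also have "\<dots> \<le> (\<integral>\<^sup>+x. F x + ennreal C \<partial>\<pi>)"
      by (intro nn_integral_mono pw)
    also have "\<dots> = (\<integral>\<^sup>+x. F x \<partial>\<pi>) + ennreal C"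
      by (simp add: nn_integral_add measure_pmf.emeasure_space_1)
    finally have ineq: "(\<integral>\<^sup>+x. F x \<partial>\<pi>) + ennreal (1 - \<rho>) * (\<integral>\<^sup>+x. G N x \<partial>\<pi>) \<le> (\<integral>\<^sup>+x. F x \<partial>\<pi>) + ennreal C" .
    have "(\<integral>\<^sup>+x. F x \<partial>\<pi>) \<le> (\<integral>\<^sup>+x. ennreal (exp (\<theta> * real N)) \<partial>\<pi>)"
      by (intro nn_integral_mono FleN)
    also have "\<dots> < \<infinity>" by (simp add: measure_pmf.emeasure_space_1)
    finally have "(\<integral>\<^sup>+x. F x \<partial>\<pi>) \<noteq> \<infinity>" by simp
    then have ineq2: "ennreal (1 - \<rho>) * (\<integral>\<^sup>+x. G N x \<partial>\<pi>) \<le> ennreal C"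
      using ineq by (simp add: ennreal_add_left_cancel_le)
    have one: "ennreal (1 / (1 - \<rho>)) * ennreal (1 - \<rho>) = 1"
      using rho by (simp add: ennreal_mult[symmetric])
    have "(\<integral>\<^sup>+x. G N x \<partial>\<pi>) = ennreal (1 / (1 - \<rho>)) * (ennreal (1 - \<rho>) * (\<integral>\<^sup>+x. G N x \<partial>\<pi>))"
      by (simp add: mult.assoc[symmetric] one)
    also have "\<dots> \<le> ennreal (1 / (1 - \<rho>)) * ennreal C" by (rule mult_left_mono[OF ineq2]) simp
    also have "\<dots> = ennreal (C / (1 - \<rho>))" using rho C0 by (simp add: ennreal_mult[symmetric])
    finally show ?thesis .
  qed
  have inc: "incseq G"
    unfolding G_def by (intro incseq_SucI le_funI mult_left_mono) (auto simp: indicator_def)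
  have sup: "(SUP N. G N x) = ennreal (exp (\<theta> * V x)) * indicator {y. \<kappa> < V y} x" for x
  proof (rule antisym)
    show "(SUP N. G N x) \<le> ennreal (exp (\<theta> * V x)) * indicator {y. \<kappa> < V y} x"
      by (intro SUP_least) (auto simp: G_def indicator_def)
    obtain N :: nat where "V x \<le> real N" using real_arch_simple by blast
    then have "G N x = ennreal (exp (\<theta> * V x)) * indicator {y. \<kappa> < V y} x"
      by (simp add: G_def indicator_def)
    then show "ennreal (exp (\<theta> * V x)) * indicator {y. \<kappa> < V y} x \<le> (SUP N. G N x)"
      by (metis SUP_upper UNIV_I)
  qed
  have "(\<integral>\<^sup>+x. ennreal (exp (\<theta> * V x)) * indicator {y. \<kappa> < V y} x \<partial>\<pi>) = (SUP N. \<integral>\<^sup>+x. G N x \<partial>\<pi>)"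
    unfolding sup[symmetric] by (rule nn_integral_monotone_convergence_SUP[OF inc]) simp
  also have "\<dots> \<le> ennreal (C / (1 - \<rho>))" by (intro SUP_least Gb)
  finally have tail: "(\<integral>\<^sup>+x. ennreal (exp (\<theta> * V x)) * indicator {y. \<kappa> < V y} x \<partial>\<pi>) \<le> ennreal (C / (1 - \<rho>))" .
  have "(\<integral>\<^sup>+x. ennreal (exp (\<theta> * V x)) \<partial>\<pi>)
     \<le> (\<integral>\<^sup>+x. ennreal (exp (\<theta> * \<kappa>)) + ennreal (exp (\<theta> * V x)) * indicator {y. \<kappa> < V y} x \<partial>\<pi>)"
  proof (intro nn_integral_mono)
    fix x
    show "ennreal (exp (\<theta> * V x)) \<le> ennreal (exp (\<theta> * \<kappa>)) + ennreal (exp (\<theta> * V x)) * indicator {y. \<kappa> < V y} x"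
    proof (cases "\<kappa> < V x")
      case True then show ?thesis by (simp add: add_increasing)
    next
      case False
      then have "exp (\<theta> * V x) \<le> exp (\<theta> * \<kappa>)" using th by (simp add: mult_left_mono)
      then show ?thesis using False by (simp add: ennreal_leI)
    qed
  qed
  also have "\<dots> = ennreal (exp (\<theta> * \<kappa>)) + (\<integral>\<^sup>+x. ennreal (exp (\<theta> * V x)) * indicator {y. \<kappa> < V y} x \<partial>\<pi>)"
    by (simp add: nn_integral_add measure_pmf.emeasure_space_1)
  also have "\<dots> \<le> ennreal (exp (\<theta> * \<kappa>)) + ennreal (C / (1 - \<rho>))"
    using tail by (rule add_left_mono)
  also have "\<dots> = ennreal (exp (\<theta> * \<kappa>) + C / (1 - \<rho>))"
    using rho C0 by (simp add: ennreal_plus)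
  finally show ?thesis .
qed


definition Vc :: "real^'n^'n \<Rightarrow> real^'n^'n \<Rightarrow> real" where
  "Vc c R = cnorm c (perp_K c R)"

definition Rn :: "real^'n^'n \<Rightarrow> real^'n^'n \<Rightarrow> real^'n^'n \<Rightarrow> real^'n^'n" where
  "Rn R A S = (\<chi> i j. max 0 (R$i$j + A$i$j - S$i$j))"

definition D2 :: "real^'n^'n \<Rightarrow> nat \<Rightarrow> real" where
  "D2 c Amax = (\<Sum>i\<in>UNIV. \<Sum>j\<in>UNIV. c$i$j * (real Amax + 1)^2)"

lemma cinner_add_left: "cinner c (x + y) z = cinner c x z + cinner c y z"
  by (simp add: cinner_def algebra_simps sum.distrib)
lemma cinner_add_right: "cinner c x (y + z) = cinner c x y + cinner c x z"
  by (simp add: cinner_def algebra_simps sum.distrib)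
lemma cinner_diff_left: "cinner c (x - y) z = cinner c x z - cinner c y z"
  by (simp add: cinner_def algebra_simps sum_subtractf)
lemma cinner_diff_right: "cinner c x (y - z) = cinner c x y - cinner c x z"
  by (simp add: cinner_def algebra_simps sum_subtractf)
lemma cinner_commute: "cinner c x y = cinner c y x"
  by (simp add: cinner_def algebra_simps)

lemma cinner_self_nonneg:
  assumes "\<forall>i j. 0 < c$i$j" shows "0 \<le> cinner c x x"
  using assms by (simp add: cinner_sqm)

lemma cnorm_sq:
  assumes "\<forall>i j. 0 < c$i$j" shows "(cnorm c x)^2 = cinner c x x"
  using cinner_self_nonneg[OF assms] by (simp add: cnorm_def)

lemma cinner_CS:
  assumes "\<forall>i j. 0 < c$i$j" shows "\<bar>cinner c x y\<bar> \<le> cnorm c x * cnorm c y"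
  using Cauchy_Schwarz_ineq2[of "sqm c x" "sqm c y"] by (simp add: cinner_sqm[OF assms] cnorm_sqm[OF assms])

lemma pmat_01: "pmat p $ i $ j = 0 \<or> pmat p $ i $ j = 1"
  by (simp add: pmat_def)

lemma drift_det:
  fixes c R A :: "real^'n::finite^'n"
  assumes cpos: "\<forall>i j. 0 < c$i$j"
    and Rint: "\<And>i j. R$i$j = 0 \<or> 1 \<le> R$i$j"
    and Ab: "\<And>i j. 0 \<le> A$i$j \<and> A$i$j \<le> real Amax"
  shows "(Vc c (Rn R A (pmat p)))^2 \<le> (Vc c R)^2 + 2 * cinner c (perp_K c R) (A - pmat p) + D2 c Amax"
proof -
  define S where "S = pmat p"
  define pr where "pr = proj_K c R"
  define P where "P = perp_K c R"
  define \<Delta> where "\<Delta> = Rn R A S - R"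
  have prK: "pr \<in> cone_K c" unfolding pr_def by (rule proj_K_prop(1)[OF cpos])
  have prnn: "0 \<le> pr$i$j" for i j by (rule cone_K_nonneg[OF cpos prK])
  have Rnn: "0 \<le> R$i$j" for i j using Rint[of i j] by auto
  have S01: "S$i$j = 0 \<or> S$i$j = 1" for i j unfolding S_def by (rule pmat_01)
  have eq: "Rn R A S - pr = P + \<Delta>" by (simp add: P_def \<Delta>_def perp_K_def pr_def)
  have V1: "Vc c (Rn R A S) \<le> cnorm c (Rn R A S - pr)"
    unfolding Vc_def by (rule proj_K_prop(2)[OF cpos prK])
  have "(Vc c (Rn R A S))^2 \<le> (cnorm c (Rn R A S - pr))^2"
    using V1 by (intro power_mono) (simp_all add: Vc_def cnorm_nonneg[OF cpos])
  also have "\<dots> = cinner c P P + 2 * cinner c P \<Delta> + cinner c \<Delta> \<Delta>"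
    unfolding eq cnorm_sq[OF cpos] by (simp add: cinner_add_left cinner_add_right cinner_commute[of c \<Delta> P])
  also have "cinner c P P = (Vc c R)^2" by (simp add: Vc_def cnorm_sq[OF cpos] P_def)
  also have "cinner c P \<Delta> \<le> cinner c P (A - S)"
  proof -
    have "cinner c P \<Delta> - cinner c P (A - S) = (\<Sum>i\<in>UNIV. \<Sum>j\<in>UNIV. c$i$j * P$i$j * (\<Delta>$i$j - (A - S)$i$j))"
      by (simp add: cinner_def right_diff_distrib sum_subtractf)
    also have "\<dots> \<le> 0"
    proof (intro sum_nonpos)
      fix i j
      have cij: "0 < c$i$j" using cpos by simp
      have d: "\<Delta>$i$j - (A - S)$i$j = max 0 (S$i$j - R$i$j - A$i$j)"
        by (simp add: \<Delta>_def Rn_def max_def algebra_simps)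
      show "c$i$j * P$i$j * (\<Delta>$i$j - (A - S)$i$j) \<le> 0"
      proof (cases "S$i$j - R$i$j - A$i$j \<le> 0")
        case True
        have "\<Delta>$i$j - (A - S)$i$j = 0" using True by (simp only: d)
        then show ?thesis by simp
      next
        case False
        then have "R$i$j < 1" using S01[of i j] Ab[of i j] by auto
        then have "R$i$j = 0" using Rint[of i j] by auto
        then have "P$i$j \<le> 0" using prnn[of i j] by (simp add: P_def perp_K_def pr_def)
        moreover have "0 \<le> \<Delta>$i$j - (A - S)$i$j" unfolding d by simp
        ultimately show ?thesis using cij
          by (intro mult_nonpos_nonneg mult_nonneg_nonpos) auto
      qed
    qed
    finally show ?thesis by simp
  qed
  also have "cinner c \<Delta> \<Delta> \<le> D2 c Amax"
    unfolding cinner_def D2_def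
  proof (intro sum_mono)
    fix i j
    have cij: "0 < c$i$j" using cpos by simp
    have "\<Delta>$i$j = max (- R$i$j) (A$i$j - S$i$j)" by (simp add: \<Delta>_def Rn_def max_def)
    then have "\<bar>\<Delta>$i$j\<bar> \<le> real Amax + 1" using S01[of i j] Ab[of i j] Rnn[of i j] by (auto simp: max_def)
    then have "(\<Delta>$i$j)^2 \<le> (real Amax + 1)^2"
      using power_mono[of "\<bar>\<Delta>$i$j\<bar>" "real Amax + 1" 2] by simp
    then show "c$i$j * \<Delta>$i$j * \<Delta>$i$j \<le> c$i$j * (real Amax + 1)^2"
      using cij by (simp add: mult.assoc power2_eq_square[symmetric])
  qed
  finally show ?thesis by (simp add: S_def P_def)
qed

lemma rn_lip:
  fixes c R A :: "real^'n::finite^'n"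
  assumes cpos: "\<forall>i j. 0 < c$i$j"
    and Rnn: "\<And>i j. 0 \<le> R$i$j"
    and Ab: "\<And>i j. 0 \<le> A$i$j \<and> A$i$j \<le> real Amax"
  shows "\<bar>Vc c (Rn R A (pmat p)) - Vc c R\<bar> \<le> sqrt (D2 c Amax)"
proof -
  define \<Delta> where "\<Delta> = Rn R A (pmat p) - R"
  have "cinner c \<Delta> \<Delta> \<le> D2 c Amax"
    unfolding cinner_def D2_def
  proof (intro sum_mono)
    fix i j
    have cij: "0 < c$i$j" using cpos by simp
    have "\<Delta>$i$j = max (- R$i$j) (A$i$j - pmat p$i$j)" by (simp add: \<Delta>_def Rn_def max_def)
    then have "\<bar>\<Delta>$i$j\<bar> \<le> real Amax + 1" using pmat_01[of p i j] Ab[of i j] Rnn[of i j] by (auto simp: max_def)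
    then have "(\<Delta>$i$j)^2 \<le> (real Amax + 1)^2"
      using power_mono[of "\<bar>\<Delta>$i$j\<bar>" "real Amax + 1" 2] by simp
    then show "c$i$j * \<Delta>$i$j * \<Delta>$i$j \<le> c$i$j * (real Amax + 1)^2"
      using cij by (simp add: mult.assoc power2_eq_square[symmetric])
  qed
  then have cn: "cnorm c \<Delta> \<le> sqrt (D2 c Amax)" unfolding cnorm_def by (rule real_sqrt_le_mono)
  have l1: "Vc c (Rn R A (pmat p)) \<le> cnorm c \<Delta> + Vc c R"
    unfolding Vc_def \<Delta>_def by (rule perp_lipschitz[OF cpos])
  have l2: "Vc c R \<le> cnorm c (R - Rn R A (pmat p)) + Vc c (Rn R A (pmat p))"
    unfolding Vc_def by (rule perp_lipschitz[OF cpos])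
  have "cnorm c (R - Rn R A (pmat p)) = cnorm c \<Delta>" unfolding \<Delta>_def by (rule cnorm_minus[OF cpos])
  then show ?thesis using l1 l2 cn by linarith
qed

lemma cinner_K_ds:
  fixes c x pr :: "real^'n::finite^'n"
  assumes cpos: "\<forall>i j. 0 < c$i$j" and prK: "pr \<in> cone_K c" and xds: "x \<in> doubly_stochastic"
  obtains s where "cinner c pr x = s" "\<And>y. y \<in> doubly_stochastic \<Longrightarrow> cinner c pr y = s"
proof -
  obtain w w' :: "real^'n" where pr: "pr = (\<chi> i j. (w$i + w'$j) / c$i$j)"
    using prK by (auto simp: cone_K_def)
  have gen: "cinner c pr y = sum (\<lambda>i. w$i) UNIV + sum (\<lambda>j. w'$j) UNIV" if "y \<in> doubly_stochastic" for y
  proof -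
    have "cinner c pr y = (\<Sum>i\<in>UNIV. \<Sum>j\<in>UNIV. w$i * y$i$j + w'$j * y$i$j)"
    proof -
      have cnz: "c$i$j \<noteq> 0" for i j using cpos by (metis less_irrefl)
      show ?thesis unfolding cinner_def pr using cnz by (intro sum.cong refl) (simp add: field_simps)
    qed
    also have "\<dots> = (\<Sum>i\<in>UNIV. w$i * (\<Sum>j\<in>UNIV. y$i$j)) + (\<Sum>j\<in>UNIV. w'$j * (\<Sum>i\<in>UNIV. y$i$j))"
      by (simp add: sum.distrib sum_distrib_left sum.swap[of "\<lambda>i j. w'$j * y$i$j"])
    also have "\<dots> = sum (\<lambda>i. w$i) UNIV + sum (\<lambda>j. w'$j) UNIV"
      using that by (simp add: ds_row ds_col)
    finally show ?thesis .
  qed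
  show ?thesis by (rule that[OF gen[OF xds] gen])
qed


lemma next_entry:
  assumes "s = 0 \<or> s = 1"
  shows "real (nat \<lfloor>real q + real aa - s + max 0 (s - real q - real aa)\<rfloor>) = max 0 (real q + real aa - s)"
proof -
  have "real q + real aa - s + max 0 (s - real q - real aa) = real (if s = 1 then q + aa - 1 else q + aa)"
    using assms by (cases "q + aa") (auto simp: max_def of_nat_diff)
  moreover have "max 0 (real q + real aa - s) = real (if s = 1 then q + aa - 1 else q + aa)"
    using assms by (cases "q + aa") (auto simp: max_def of_nat_diff)
  ultimately show ?thesis by (simp only: floor_of_nat nat_int)
qed

lemma realmat_next:
  assumes "\<And>i j. S$i$j = 0 \<or> S$i$j = 1"
  shows "realmat (\<chi> i j. let q = real (Q$i$j); aa = real (A$i$j); s = S$i$j; u = max 0 (s - q - aa)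
                         in nat \<lfloor>q + aa - s + u\<rfloor>) = Rn (realmat Q) (realmat A) S"
  using next_entry[OF assms] by (simp add: realmat_def Rn_def vec_eq_iff Let_def)

lemma finite_perm_matrices: "finite (perm_matrices :: (real^'n::finite^'n) set)"
  unfolding perm_matrices_pmat by (intro finite_imageI finite_permutations) simp

lemma maxweight_set:
  fixes c :: "real^'n::finite^'n"
  shows "set_pmf (maxweight c Q) = {s \<in> perm_matrices. \<forall>s'\<in>perm_matrices. cinner c (realmat Q) s' \<le> cinner c (realmat Q) s}"
    and "set_pmf (maxweight c Q) \<noteq> {}"
proof -
  define T where "T = {s \<in> perm_matrices. \<forall>s'\<in>perm_matrices. cinner c (realmat Q) s' \<le> cinner c (realmat Q) s}"
  have fin: "finite T" unfolding T_def using finite_perm_matrices by (rule finite_subset[rotated]) auto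
  have pne: "(perm_matrices :: (real^'n^'n) set) \<noteq> {}" unfolding perm_matrices_pmat by (auto intro!: exI[of _ id])
  define m where "m = Max ((\<lambda>s. cinner c (realmat Q) s) ` perm_matrices)"
  have "m \<in> (\<lambda>s. cinner c (realmat Q) s) ` perm_matrices" unfolding m_def
    using finite_perm_matrices pne by (intro Min_in Max_in) auto
  then obtain s0 where s0: "s0 \<in> perm_matrices" "cinner c (realmat Q) s0 = m" by auto
  have "cinner c (realmat Q) s' \<le> m" if "s' \<in> perm_matrices" for s'
    unfolding m_def using finite_perm_matrices that by (intro Max_ge) auto
  then have ne: "T \<noteq> {}" unfolding T_def using s0 by auto
  show "set_pmf (maxweight c Q) = T" unfolding maxweight_def T_def[symmetric] using fin ne by simp
  then show "set_pmf (maxweight c Q) \<noteq> {}" using ne by simp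
qed

lemma perm_matrices_elem:
  assumes "s \<in> perm_matrices" obtains p where "p permutes UNIV" "s = pmat p"
  using assms unfolding perm_matrices_pmat by auto

lemma arrivals_set:
  assumes "A \<in> set_pmf (arrivals a)" shows "A$i$j \<in> set_pmf (a i j)"
proof -
  obtain f where f: "f \<in> set_pmf (Pi_pmf UNIV 0 (\<lambda>(i, j). a i j))" "A = (\<chi> i j. f (i, j))"
    using assms unfolding arrivals_def by auto
  then have "f (i,j) \<in> set_pmf (a i j)" by (auto simp: set_Pi_pmf PiE_dflt_def)
  then show ?thesis using f(2) by simp
qed

lemma arrivals_finite:
  fixes a :: "'n::finite \<Rightarrow> 'n \<Rightarrow> nat pmf"
  assumes "\<And>i j. set_pmf (a i j) \<subseteq> {0..Amax}"
  shows "finite (set_pmf (arrivals a))"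
proof -
  have "set_pmf (Pi_pmf UNIV 0 (\<lambda>(i, j). a i j)) \<subseteq> PiE UNIV (\<lambda>_. {0..Amax})"
    using assms by (force simp: set_Pi_pmf PiE_dflt_def)
  then have "finite (set_pmf (Pi_pmf UNIV 0 (\<lambda>(i, j). a i j)))"
    by (rule finite_subset) (intro finite_PiE, auto)
  then show ?thesis unfolding arrivals_def by simp
qed

lemma arrivals_mean:
  fixes a :: "'n::finite \<Rightarrow> 'n \<Rightarrow> nat pmf"
  shows "measure_pmf.expectation (arrivals a) (\<lambda>A. real (A$i$j)) = measure_pmf.expectation (a i j) real"
proof -
  have "measure_pmf.expectation (arrivals a) (\<lambda>A. real (A$i$j))
       = measure_pmf.expectation (Pi_pmf UNIV 0 (\<lambda>(i, j). a i j)) (\<lambda>f. real (f (i,j)))"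
    by (simp add: arrivals_def)
  also have "\<dots> = measure_pmf.expectation (map_pmf (\<lambda>f. f (i,j)) (Pi_pmf UNIV 0 (\<lambda>(i, j). a i j))) real"
    by simp
  also have "\<dots> = measure_pmf.expectation (a i j) real"
    by (subst Pi_pmf_component) auto
  finally show ?thesis .
qed


lemma exp_quad:
  fixes x :: real assumes "\<bar>x\<bar> \<le> 1" shows "exp x \<le> 1 + x + x^2"
proof (cases "0 \<le> x")
  case True then show ?thesis using exp_bound[of x] assms by simp
next
  case False
  define t where "t = - x"
  have t: "0 < t" "t \<le> 1" using False assms by (auto simp: t_def)
  have e: "1 + t \<le> exp t" by (rule exp_ge_add_one_self)
  have t2: "0 < t^2" using t by simp
  have pos: "0 < 1 - t + t^2" using t t2 by linarith
  have id: "(1 - t + t^2) * (1 + t) = 1 + t^3"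
    by (simp add: algebra_simps power2_eq_square power3_eq_cube)
  have "1 \<le> (1 - t + t^2) * (1 + t)" unfolding id using t by simp
  also have "\<dots> \<le> (1 - t + t^2) * exp t" using pos e by (intro mult_left_mono) auto
  finally have h: "1 \<le> (1 - t + t^2) * exp t" .
  have "exp (- t) = exp (- t) * 1" by simp
  also have "\<dots> \<le> exp (- t) * ((1 - t + t^2) * exp t)" using h by (intro mult_left_mono) auto
  also have "\<dots> = (1 - t + t^2) * (exp t * exp (- t))" by (simp only: mult_ac)
  also have "\<dots> = 1 - t + t^2" by (simp add: exp_minus_inverse)
  finally have "exp (- t) \<le> 1 - t + t^2" .
  then show ?thesis by (simp add: t_def)
qed

lemma exp_cinner:
  fixes a :: "'n::finite \<Rightarrow> 'n \<Rightarrow> nat pmf" and c P :: "real^'n^'n"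
  assumes fin: "finite (set_pmf (arrivals a))"
  shows "measure_pmf.expectation (arrivals a) (\<lambda>A. cinner c P (realmat A))
     = (\<Sum>i\<in>UNIV. \<Sum>j\<in>UNIV. c$i$j * P$i$j * measure_pmf.expectation (a i j) real)"
proof -
  have int: "integrable (measure_pmf (arrivals a)) f" for f :: "_ \<Rightarrow> real"
    by (rule integrable_measure_pmf_finite[OF fin])
  have "measure_pmf.expectation (arrivals a) (\<lambda>A. cinner c P (realmat A))
      = measure_pmf.expectation (arrivals a) (\<lambda>A. \<Sum>i\<in>UNIV. \<Sum>j\<in>UNIV. c$i$j * P$i$j * real (A$i$j))"
    by (simp add: cinner_def realmat_def)
  also have "\<dots> = (\<Sum>i\<in>UNIV. \<Sum>j\<in>UNIV. c$i$j * P$i$j * measure_pmf.expectation (arrivals a) (\<lambda>A. real (A$i$j)))"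
    by (simp add: int integral_sum)
  also have "\<dots> = (\<Sum>i\<in>UNIV. \<Sum>j\<in>UNIV. c$i$j * P$i$j * measure_pmf.expectation (a i j) real)"
    by (simp add: arrivals_mean)
  finally show ?thesis .
qed


lemma sqrt_step:
  fixes V' V0 z :: real
  assumes "0 \<le> V'" "0 < V0" "V'^2 \<le> V0^2 + z"
  shows "V' \<le> V0 + z / (2 * V0)"
proof -
  have "- (V0^2) \<le> z" using assms(1,3) by (smt (verit) zero_le_power2)
  then have "- V0 / 2 \<le> z / (2 * V0)" using assms(2) by (simp add: field_simps power2_eq_square)
  then have nn: "0 \<le> V0 + z / (2 * V0)" using assms(2) by linarith
  have "(V0 + z / (2 * V0))^2 = V0^2 + z + (z / (2 * V0))^2"
    using assms(2) by (simp add: power2_eq_square field_simps)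
  then have "V'^2 \<le> (V0 + z / (2 * V0))^2" using assms(3) by (smt (verit) zero_le_power2)
  then show ?thesis using nn by (rule power2_le_imp_le)
qed

lemma realmat_nat: "realmat Q $ i $ j = 0 \<or> 1 \<le> realmat Q $ i $ j"
  by (cases "Q$i$j") (auto simp: realmat_def)

lemma qstep_nn:
  "(\<integral>\<^sup>+Q'. f Q' \<partial>qstep c a Q) = (\<integral>\<^sup>+A. \<integral>\<^sup>+S. f (\<chi> i j. let q = real (Q$i$j); aa = real (A$i$j); s = S$i$j;
                             u = max 0 (s - q - aa)
                         in nat \<lfloor>q + aa - s + u\<rfloor>) \<partial>maxweight c Q \<partial>arrivals a)"
  by (simp add: qstep_def)


lemma mw_max:
  fixes c :: "real^'n::finite^'n" and Q :: "nat^'n^'n"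
  defines "M \<equiv> Max ((\<lambda>s. cinner c (realmat Q) s) ` perm_matrices)"
  shows "\<And>p. p permutes UNIV \<Longrightarrow> cinner c (realmat Q) (pmat p) \<le> M"
    and "\<And>S. S \<in> set_pmf (maxweight c Q) \<Longrightarrow> cinner c (realmat Q) S = M"
proof -
  have pne: "(perm_matrices :: (real^'n^'n) set) \<noteq> {}" unfolding perm_matrices_pmat by (auto intro!: exI[of _ id])
  have le: "cinner c (realmat Q) s \<le> M" if "s \<in> perm_matrices" for s
    unfolding M_def using finite_perm_matrices that by (intro Max_ge) auto
  show "\<And>p. p permutes UNIV \<Longrightarrow> cinner c (realmat Q) (pmat p) \<le> M"
    using le unfolding perm_matrices_pmat by auto
  fix S assume S: "S \<in> set_pmf (maxweight c Q)"
  have "M \<in> (\<lambda>s. cinner c (realmat Q) s) ` perm_matrices" unfolding M_def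
    using finite_perm_matrices pne by (intro Max_in) auto
  then obtain s0 where s0: "s0 \<in> perm_matrices" "cinner c (realmat Q) s0 = M" by auto
  have "S \<in> perm_matrices" "cinner c (realmat Q) s0 \<le> cinner c (realmat Q) S"
    using S s0(1) unfolding maxweight_set(1) by auto
  then show "cinner c (realmat Q) S = M" using le s0(2) by (meson antisym)
qed

lemma drift_exp:
  fixes c \<nu> :: "real^'n::finite^'n" and a :: "'n \<Rightarrow> 'n \<Rightarrow> nat pmf" and Q :: "nat^'n^'n"
  assumes cpos: "\<forall>i j. 0 < c$i$j" and nuF: "\<nu> \<in> doubly_stochastic"
    and eta: "0 < \<eta>" "\<eta> < 1" "\<And>i j. \<eta> \<le> \<nu>$i$j"
    and aset: "\<And>i j. set_pmf (a i j) \<subseteq> {0..Amax}"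
    and amean: "\<And>i j. measure_pmf.expectation (a i j) real = (1 - \<epsilon>) * \<nu>$i$j"
    and eps: "0 \<le> \<epsilon>" "\<epsilon> * cnorm c \<nu> \<le> 1 / (2 * Kc c \<eta>)"
    and Kpos: "0 < Kc c \<eta>" and Dpos: "0 < D2 c Amax"
    and th: "0 < \<theta>" "\<theta> * sqrt (D2 c Amax) \<le> 1" "\<theta> \<le> 1 / (8 * Kc c \<eta> * D2 c Amax)"
    and big: "4 * Kc c \<eta> * D2 c Amax < Vc c (realmat Q)"
  shows "(\<integral>\<^sup>+Q'. ennreal (exp (\<theta> * Vc c (realmat Q'))) \<partial>qstep c a Q)
           \<le> ennreal ((1 - \<theta> / (4 * Kc c \<eta>)) * exp (\<theta> * Vc c (realmat Q)))"
proof -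
  define K where "K = Kc c \<eta>"
  define D where "D = D2 c Amax"
  define R where "R = realmat Q"
  define V0 where "V0 = Vc c R"
  define P where "P = perp_K c R"
  define pr where "pr = proj_K c R"
  define M where "M = Max ((\<lambda>s. cinner c (realmat Q) s) ` perm_matrices)"
  have K0: "0 < K" and D0: "0 < D" using Kpos Dpos by (simp_all add: K_def D_def)
  have bigV: "4 * K * D < V0" using big by (simp add: K_def D_def V0_def R_def)
  have "0 < 4 * K * D" using K0 D0 by simp
  then have V0pos: "0 < V0" using bigV by linarith
  have Mub: "\<And>p. p permutes UNIV \<Longrightarrow> cinner c R (pmat p) \<le> M" unfolding R_def M_def by (rule mw_max(1))
  have MS: "\<And>S. S \<in> set_pmf (maxweight c Q) \<Longrightarrow> cinner c R S = M" unfolding R_def M_def by (rule mw_max(2))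
  have prK: "pr \<in> cone_K c" unfolding pr_def by (rule proj_K_prop(1)[OF cpos])
  obtain sp where sp: "cinner c pr \<nu> = sp" "\<And>y. y \<in> doubly_stochastic \<Longrightarrow> cinner c pr y = sp"
    using cinner_K_ds[OF cpos prK nuF] by blast
  have PS: "cinner c P S = M - sp" if Sin: "S \<in> set_pmf (maxweight c Q)" for S
  proof -
    obtain p where p: "p permutes UNIV" "S = pmat p"
    proof -
      have "S \<in> perm_matrices" using Sin maxweight_set(1) by auto
      then show ?thesis by (rule perm_matrices_elem) (rule that)
    qed
    have "cinner c P S = cinner c R S - cinner c pr S" by (simp add: P_def pr_def perp_K_def cinner_diff_left)
    also have "\<dots> = M - sp" using MS[OF Sin] sp(2)[OF pmat_ds[OF p(1)]] p(2) by simp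
    finally show ?thesis .
  qed
  define z where "z = (\<lambda>A::nat^'n^'n. 2 * (cinner c P (realmat A) - M + sp) + D)"
  define h where "h = (\<lambda>A::nat^'n^'n. exp (\<theta> * V0) * (1 + \<theta> * z A / (2 * V0) + \<theta>^2 * D))"
  have Ab: "0 \<le> realmat A $ i $ j \<and> realmat A $ i $ j \<le> real Amax" if "A \<in> set_pmf (arrivals a)" for A i j
    using arrivals_set[OF that, of i j] aset[of i j] by (auto simp: realmat_def)
  have pw: "exp (\<theta> * Vc c (realmat (\<chi> i j. let q = real (Q$i$j); aa = real (A$i$j); s = S$i$j;
                             u = max 0 (s - q - aa) in nat \<lfloor>q + aa - s + u\<rfloor>))) \<le> h A"
    if A: "A \<in> set_pmf (arrivals a)" and S: "S \<in> set_pmf (maxweight c Q)" for A S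
  proof -
    obtain p where p: "p permutes UNIV" "S = pmat p"
    proof -
      have "S \<in> perm_matrices" using S maxweight_set(1) by auto
      then show ?thesis by (rule perm_matrices_elem) (rule that)
    qed
    have rn: "realmat (\<chi> i j. let q = real (Q$i$j); aa = real (A$i$j); s = S$i$j;
                             u = max 0 (s - q - aa) in nat \<lfloor>q + aa - s + u\<rfloor>) = Rn R (realmat A) (pmat p)"
      unfolding R_def p(2) by (rule realmat_next) (rule pmat_01)
    define V' where "V' = Vc c (Rn R (realmat A) (pmat p))"
    have dd: "V'^2 \<le> V0^2 + 2 * cinner c P (realmat A - pmat p) + D"
      unfolding V'_def V0_def P_def D_def
      by (rule drift_det[OF cpos]; simp add: R_def realmat_nat Ab[OF A])
    have "2 * cinner c P (realmat A - pmat p) + D = z A"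
      using PS[OF S] p(2) by (simp add: z_def cinner_diff_right)
    then have V'sq: "V'^2 \<le> V0^2 + z A" using dd by linarith
    have V'nn: "0 \<le> V'" unfolding V'_def Vc_def by (rule cnorm_nonneg[OF cpos])
    have up: "V' - V0 \<le> z A / (2 * V0)" using sqrt_step[OF V'nn V0pos V'sq] by simp
    have lip: "\<bar>V' - V0\<bar> \<le> sqrt D" unfolding V'_def V0_def D_def
      by (rule rn_lip[OF cpos _ Ab[OF A]]) (simp add: R_def realmat_def)
    have y1: "\<bar>\<theta> * (V' - V0)\<bar> \<le> 1"
    proof -
      have "\<bar>\<theta> * (V' - V0)\<bar> = \<theta> * \<bar>V' - V0\<bar>" using th(1) by (simp add: abs_mult)
      also have "\<dots> \<le> \<theta> * sqrt D" using lip th(1) by (intro mult_left_mono) auto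
      also have "\<dots> \<le> 1" using th(2) by (simp add: D_def)
      finally show ?thesis .
    qed
    have sqD: "(V' - V0)^2 \<le> D"
    proof -
      have "(V' - V0)^2 = \<bar>V' - V0\<bar>^2" by simp
      also have "\<dots> \<le> (sqrt D)^2" using lip by (intro power_mono) auto
      also have "\<dots> = D" using D0 by simp
      finally show ?thesis .
    qed
    have "exp (\<theta> * (V' - V0)) \<le> 1 + \<theta> * (V' - V0) + (\<theta> * (V' - V0))^2"
      by (rule exp_quad[OF y1])
    also have "\<dots> \<le> 1 + \<theta> * z A / (2 * V0) + \<theta>^2 * D"
    proof -
      have "\<theta> * (V' - V0) \<le> \<theta> * (z A / (2 * V0))" using up th(1) by (intro mult_left_mono) auto
      moreover have "(\<theta> * (V' - V0))^2 \<le> \<theta>^2 * D"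
        using sqD th(1) by (simp add: power_mult_distrib mult_left_mono)
      ultimately show ?thesis by simp
    qed
    finally have "exp (\<theta> * V0) * exp (\<theta> * (V' - V0)) \<le> exp (\<theta> * V0) * (1 + \<theta> * z A / (2 * V0) + \<theta>^2 * D)"
      by (intro mult_left_mono) auto
    moreover have "exp (\<theta> * V0) * exp (\<theta> * (V' - V0)) = exp (\<theta> * V')"
      by (simp add: exp_add[symmetric] algebra_simps)
    ultimately show ?thesis unfolding rn V'_def h_def by simp
  qed
  have fin: "finite (set_pmf (arrivals a))" by (rule arrivals_finite[OF aset])
  have int: "integrable (measure_pmf (arrivals a)) f" for f :: "_ \<Rightarrow> real"
    by (rule integrable_measure_pmf_finite[OF fin])
  have hnn: "0 \<le> h A" if "A \<in> set_pmf (arrivals a)" for A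
  proof -
    obtain S where "S \<in> set_pmf (maxweight c Q)" using maxweight_set(2) by blast
    from pw[OF that this] show ?thesis by (smt (verit) exp_gt_zero)
  qed
  have "(\<integral>\<^sup>+Q'. ennreal (exp (\<theta> * Vc c (realmat Q'))) \<partial>qstep c a Q) \<le> (\<integral>\<^sup>+A. ennreal (h A) \<partial>arrivals a)"
    unfolding qstep_nn
  proof (intro nn_integral_mono_AE AE_pmfI)
    fix A assume A: "A \<in> set_pmf (arrivals a)"
    have "(\<integral>\<^sup>+S. ennreal (exp (\<theta> * Vc c (realmat (\<chi> i j. let q = real (Q$i$j); aa = real (A$i$j); s = S$i$j;
                             u = max 0 (s - q - aa) in nat \<lfloor>q + aa - s + u\<rfloor>)))) \<partial>maxweight c Q)
        \<le> (\<integral>\<^sup>+S. ennreal (h A) \<partial>maxweight c Q)"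
      by (intro nn_integral_mono_AE AE_pmfI ennreal_leI pw[OF A])
    also have "\<dots> = ennreal (h A)" by (simp add: measure_pmf.emeasure_space_1)
    finally show "(\<integral>\<^sup>+S. ennreal (exp (\<theta> * Vc c (realmat (\<chi> i j. let q = real (Q$i$j); aa = real (A$i$j); s = S$i$j;
                             u = max 0 (s - q - aa) in nat \<lfloor>q + aa - s + u\<rfloor>)))) \<partial>maxweight c Q)
        \<le> ennreal (h A)" .
  qed
  also have "\<dots> = ennreal (measure_pmf.expectation (arrivals a) h)"
    by (intro nn_integral_eq_integral int AE_pmfI hnn)
  also have "measure_pmf.expectation (arrivals a) h \<le> (1 - \<theta> / (4 * K)) * exp (\<theta> * V0)"
  proof -
    define e where "e = exp (\<theta> * V0)"
    have e0: "0 < e" by (simp add: e_def)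
    define f where "f = (\<lambda>A::nat^'n^'n. cinner c P (realmat A))"
    have Ef: "measure_pmf.expectation (arrivals a) f = (1 - \<epsilon>) * cinner c P \<nu>"
    proof -
      have "measure_pmf.expectation (arrivals a) f = (\<Sum>i\<in>UNIV. \<Sum>j\<in>UNIV. c$i$j * P$i$j * ((1 - \<epsilon>) * \<nu>$i$j))"
        unfolding f_def by (simp add: exp_cinner[OF fin] amean)
      also have "\<dots> = (1 - \<epsilon>) * cinner c P \<nu>"
        by (simp add: cinner_def sum_distrib_left mult_ac)
      finally show ?thesis .
    qed
    define \<alpha> where "\<alpha> = e * (1 + \<theta> * (2 * (sp - M) + D) / (2 * V0) + \<theta>^2 * D)"
    define \<beta> where "\<beta> = e * \<theta> / V0"
    have hab: "h A = \<alpha> + \<beta> * f A" for A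
      using V0pos unfolding h_def z_def \<alpha>_def \<beta>_def f_def e_def by (simp add: field_simps)
    have Eh: "measure_pmf.expectation (arrivals a) h = \<alpha> + \<beta> * ((1 - \<epsilon>) * cinner c P \<nu>)"
      unfolding hab Ef[symmetric] by (simp add: int)
    define X where "X = 2 * ((1 - \<epsilon>) * cinner c P \<nu> - M + sp) + D"
    have Eh2: "\<alpha> + \<beta> * ((1 - \<epsilon>) * cinner c P \<nu>) = e * (1 + \<theta> * X / (2 * V0) + \<theta>^2 * D)"
      using V0pos unfolding \<alpha>_def \<beta>_def X_def by (simp add: field_simps)
    have cPnu: "cinner c P \<nu> = cinner c R \<nu> - sp"
      using sp(1) by (simp add: P_def perp_K_def cinner_diff_left pr_def)
    have keyb: "V0 \<le> K * (M - cinner c R \<nu>)"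
      unfolding V0_def Vc_def K_def
      by (rule key[OF cpos nuF eta _ Mub]) (simp add: R_def realmat_def)
    have CS: "- (\<epsilon> * cinner c P \<nu>) \<le> V0 / (2 * K)"
    proof -
      have "- (\<epsilon> * cinner c P \<nu>) \<le> \<epsilon> * \<bar>cinner c P \<nu>\<bar>" using eps(1) by (simp add: abs_if)
      also have "\<dots> \<le> \<epsilon> * (V0 * cnorm c \<nu>)"
        using cinner_CS[OF cpos, of P \<nu>] eps(1) by (intro mult_left_mono) (auto simp: V0_def Vc_def P_def)
      also have "\<dots> = V0 * (\<epsilon> * cnorm c \<nu>)" by simp
      also have "\<dots> \<le> V0 * (1 / (2 * K))" using eps(2) V0pos by (intro mult_left_mono) (auto simp: K_def)
      finally show ?thesis by simp
    qed
    have Xb: "X \<le> - V0 / K + D"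
    proof -
      have "X = 2 * (cinner c R \<nu> - M) - 2 * (\<epsilon> * cinner c P \<nu>) + D"
        unfolding X_def cPnu by (simp add: algebra_simps)
      moreover have "cinner c R \<nu> - M \<le> - V0 / K" using keyb K0 by (simp add: field_simps)
      ultimately show ?thesis using CS by (simp add: field_simps)
    qed
    have t1: "\<theta> * X / (2 * V0) \<le> - \<theta> / (2 * K) + \<theta> / (8 * K)"
    proof -
      have "\<theta> * X / (2 * V0) \<le> \<theta> * (- V0 / K + D) / (2 * V0)"
        using Xb th(1) V0pos by (intro divide_right_mono mult_left_mono) auto
      also have "\<dots> = - \<theta> / (2 * K) + \<theta> * (D / (2 * V0))"
        using V0pos K0 by (simp add: field_simps)
      also have "\<theta> * (D / (2 * V0)) \<le> \<theta> * (1 / (8 * K))"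
      proof (intro mult_left_mono)
        show "D / (2 * V0) \<le> 1 / (8 * K)" using bigV V0pos K0 by (simp add: field_simps)
      qed (use th(1) in simp)
      finally show ?thesis by simp
    qed
    have t2: "\<theta>^2 * D \<le> \<theta> / (8 * K)"
    proof -
      have "\<theta> * D \<le> 1 / (8 * K)"
        using th(3) D0 K0 by (simp add: K_def D_def field_simps)
      then have "\<theta> * (\<theta> * D) \<le> \<theta> * (1 / (8 * K))" using th(1) by (intro mult_left_mono) auto
      then show ?thesis by (simp add: power2_eq_square mult_ac)
    qed
    have "1 + \<theta> * X / (2 * V0) + \<theta>^2 * D \<le> 1 - \<theta> / (4 * K)"
    proof -
      have "- \<theta> / (2 * K) + \<theta> / (8 * K) + \<theta> / (8 * K) = - \<theta> / (4 * K)"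
        using K0 by (simp add: field_simps)
      then show ?thesis using t1 t2 by linarith
    qed
    then have "e * (1 + \<theta> * X / (2 * V0) + \<theta>^2 * D) \<le> e * (1 - \<theta> / (4 * K))"
      using e0 by (intro mult_left_mono) auto
    then show ?thesis using Eh Eh2 by (simp add: e_def mult.commute)
  qed
  then have "ennreal (measure_pmf.expectation (arrivals a) h) \<le> ennreal ((1 - \<theta> / (4 * K)) * exp (\<theta> * V0))"
    by (rule ennreal_leI)
  finally show ?thesis by (simp add: K_def V0_def R_def)
qed

lemma drift_small:
  fixes c :: "real^'n::finite^'n" and a :: "'n \<Rightarrow> 'n \<Rightarrow> nat pmf" and Q :: "nat^'n^'n"
  assumes cpos: "\<forall>i j. 0 < c$i$j"
    and aset: "\<And>i j. set_pmf (a i j) \<subseteq> {0..Amax}"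
    and th: "0 < \<theta>" and small: "Vc c (realmat Q) \<le> \<kappa>"
  shows "(\<integral>\<^sup>+Q'. ennreal (exp (\<theta> * Vc c (realmat Q'))) \<partial>qstep c a Q)
           \<le> ennreal (exp (\<theta> * (\<kappa> + sqrt (D2 c Amax))))"
proof -
  define B where "B = ennreal (exp (\<theta> * (\<kappa> + sqrt (D2 c Amax))))"
  have Ab: "0 \<le> realmat A $ i $ j \<and> realmat A $ i $ j \<le> real Amax" if "A \<in> set_pmf (arrivals a)" for A i j
    using arrivals_set[OF that, of i j] aset[of i j] by (auto simp: realmat_def)
  have pw: "exp (\<theta> * Vc c (realmat (\<chi> i j. let q = real (Q$i$j); aa = real (A$i$j); s = S$i$j;
                             u = max 0 (s - q - aa) in nat \<lfloor>q + aa - s + u\<rfloor>)))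
           \<le> exp (\<theta> * (\<kappa> + sqrt (D2 c Amax)))"
    if A: "A \<in> set_pmf (arrivals a)" and S: "S \<in> set_pmf (maxweight c Q)" for A S
  proof -
    obtain p where p: "p permutes UNIV" "S = pmat p"
    proof -
      have "S \<in> perm_matrices" using S maxweight_set(1) by auto
      then show ?thesis by (rule perm_matrices_elem) (rule that)
    qed
    have rn: "realmat (\<chi> i j. let q = real (Q$i$j); aa = real (A$i$j); s = S$i$j;
                             u = max 0 (s - q - aa) in nat \<lfloor>q + aa - s + u\<rfloor>) = Rn (realmat Q) (realmat A) (pmat p)"
      unfolding p(2) by (rule realmat_next) (rule pmat_01)
    have "\<bar>Vc c (Rn (realmat Q) (realmat A) (pmat p)) - Vc c (realmat Q)\<bar> \<le> sqrt (D2 c Amax)"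
      by (rule rn_lip[OF cpos _ Ab[OF A]]) (simp add: realmat_def)
    then have "Vc c (Rn (realmat Q) (realmat A) (pmat p)) \<le> \<kappa> + sqrt (D2 c Amax)" using small by linarith
    then show ?thesis unfolding rn using th by simp
  qed
  have "(\<integral>\<^sup>+Q'. ennreal (exp (\<theta> * Vc c (realmat Q'))) \<partial>qstep c a Q) \<le> (\<integral>\<^sup>+A. B \<partial>arrivals a)"
    unfolding qstep_nn
  proof (intro nn_integral_mono_AE AE_pmfI)
    fix A assume A: "A \<in> set_pmf (arrivals a)"
    have "(\<integral>\<^sup>+S. ennreal (exp (\<theta> * Vc c (realmat (\<chi> i j. let q = real (Q$i$j); aa = real (A$i$j); s = S$i$j;
                             u = max 0 (s - q - aa) in nat \<lfloor>q + aa - s + u\<rfloor>)))) \<partial>maxweight c Q)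
        \<le> (\<integral>\<^sup>+S. B \<partial>maxweight c Q)"
      unfolding B_def by (intro nn_integral_mono_AE AE_pmfI ennreal_leI pw[OF A])
    also have "\<dots> = B" by (simp add: measure_pmf.emeasure_space_1)
    finally show "(\<integral>\<^sup>+S. ennreal (exp (\<theta> * Vc c (realmat (\<chi> i j. let q = real (Q$i$j); aa = real (A$i$j); s = S$i$j;
                             u = max 0 (s - q - aa) in nat \<lfloor>q + aa - s + u\<rfloor>)))) \<partial>maxweight c Q)
        \<le> B" .
  qed
  also have "\<dots> = B" by (simp add: measure_pmf.emeasure_space_1)
  finally show ?thesis unfolding B_def .
qed


lemma Kc_pos:
  fixes c :: "real^'n::finite^'n"
  assumes cpos: "\<forall>i j. 0 < c$i$j" and eta: "0 < \<eta>"
  shows "0 < Kc c \<eta>"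
proof -
  have "0 < card {p. p permutes (UNIV::'n set)}"
    by (auto simp: card_gt_0_iff finite_permutations intro!: exI[of _ id])
  moreover have "0 < (\<Sum>i\<in>UNIV. \<Sum>j\<in>UNIV. 1 / c$i$j)"
    using cpos by (intro sum_pos) auto
  ultimately show ?thesis using eta by (simp add: Kc_def)
qed

lemma D2_pos:
  fixes c :: "real^'n::finite^'n"
  assumes cpos: "\<forall>i j. 0 < c$i$j" shows "0 < D2 c Amax"
  unfolding D2_def using cpos by (intro sum_pos) (auto intro!: mult_pos_pos)

lemma pow_ge_self: "1 \<le> (x::real) \<Longrightarrow> 1 \<le> r \<Longrightarrow> x \<le> x ^ r"
  by (metis power_increasing power_one_right)

theorem proposition2:
  fixes c :: "real^'n::finite^'n" and \<nu> :: "real^'n^'n"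
    and Amax :: nat and \<sigma>t :: real
  assumes "CARD('n) \<ge> 2"
    and "\<forall>i j. 0 < c$i$j"
    and "\<nu> \<in> rel_interior doubly_stochastic"
  shows "\<exists>\<nu>'>0. \<exists>M :: nat \<Rightarrow> real.
    \<forall>(a :: real \<Rightarrow> 'n \<Rightarrow> 'n \<Rightarrow> nat pmf) (q0 :: real \<Rightarrow> (nat^'n^'n) pmf)
      (\<pi> :: real \<Rightarrow> (nat^'n^'n) pmf).
      (\<forall>\<epsilon>. 0 < \<epsilon> \<and> \<epsilon> < 1 \<longrightarrow>
          (\<forall>i j. set_pmf (a \<epsilon> i j) \<subseteq> {0..Amax}) \<and>
          (\<forall>i j. measure_pmf.expectation (a \<epsilon> i j) real = (1 - \<epsilon>) * \<nu>$i$j) \<and>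
          (\<Sum>i\<in>UNIV. \<Sum>j\<in>UNIV. measure_pmf.variance (a \<epsilon> i j) real) \<le> \<sigma>t\<^sup>2 \<and>
          (\<forall>x. (\<lambda>t. pmf (qdist c (a \<epsilon>) (q0 \<epsilon>) t) x) \<longlonglongrightarrow> pmf (\<pi> \<epsilon>) x))
      \<longrightarrow> (\<forall>\<epsilon>. 0 < \<epsilon> \<and> \<epsilon> \<le> \<nu>' \<longrightarrow> (\<forall>r::nat. r \<ge> 1 \<longrightarrow>
            (\<integral>\<^sup>+ Q. ennreal (cnorm c (perp_K c (realmat Q)) ^ r) \<partial>measure_pmf (\<pi> \<epsilon>))
              \<le> ennreal (M r ^ r)))"
proof -
  note cpos = assms(2)
  have nuF: "\<nu> \<in> doubly_stochastic" using assms(3) rel_interior_subset by blast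
  have nupos: "\<And>i j. 0 < \<nu>$i$j" using nu_pos[OF assms(3)] .
  obtain \<eta> where eta: "0 < \<eta>" "\<eta> < 1" "\<And>i j. \<eta> \<le> \<nu>$i$j"
    using eta_exists[OF nuF nupos] by blast
  define K where "K = Kc c \<eta>"
  define D where "D = D2 c Amax"
  have K0: "0 < K" unfolding K_def by (rule Kc_pos[OF cpos eta(1)])
  have D0: "0 < D" unfolding D_def by (rule D2_pos[OF cpos])
  define nv where "nv = cnorm c \<nu>"
  have nv0: "0 \<le> nv" unfolding nv_def by (rule cnorm_nonneg[OF cpos])
  define \<nu>' where "\<nu>' = min (1/2) (1 / (2 * K * (nv + 1)))"
  have nu'pos: "0 < \<nu>'" using K0 nv0 by (simp add: \<nu>'_def)
  define \<theta> where "\<theta> = min (1 / sqrt D) (min (1 / (8 * K * D)) K)"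
  have th0: "0 < \<theta>" using K0 D0 by (simp add: \<theta>_def)
  have th1: "\<theta> * sqrt D \<le> 1"
  proof -
    have "\<theta> \<le> 1 / sqrt D" by (simp add: \<theta>_def)
    then have "\<theta> * sqrt D \<le> 1 / sqrt D * sqrt D" using D0 by (intro mult_right_mono) auto
    then show ?thesis using D0 by simp
  qed
  have th2: "\<theta> \<le> 1 / (8 * K * D)" by (simp add: \<theta>_def)
  have th3: "\<theta> \<le> K" by (simp add: \<theta>_def)
  define \<rho> where "\<rho> = 1 - \<theta> / (4 * K)"
  have rho0: "0 \<le> \<rho>"
  proof -
    have "\<theta> / (4 * K) \<le> K / (4 * K)" using th3 K0 by (intro divide_right_mono) auto
    also have "\<dots> = 1/4" using K0 by simp
    finally show ?thesis by (simp add: \<rho>_def)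
  qed
  have rho1: "\<rho> < 1" using th0 K0 by (simp add: \<rho>_def)
  define \<kappa> where "\<kappa> = 4 * K * D"
  define C where "C = exp (\<theta> * (\<kappa> + sqrt D))"
  define B where "B = exp (\<theta> * \<kappa>) + C / (1 - \<rho>)"
  have B1: "1 \<le> B"
  proof -
    have "1 \<le> exp (\<theta> * \<kappa>)" using th0 K0 D0 by (simp add: \<kappa>_def)
    moreover have "0 \<le> C / (1 - \<rho>)" using rho1 by (simp add: C_def)
    ultimately show ?thesis unfolding B_def by linarith
  qed
  define M where "M = (\<lambda>r::nat. fact r * B / \<theta>)"
  show ?thesis
  proof (intro exI[of _ \<nu>'] conjI nu'pos exI[of _ M] allI impI)
    fix a :: "real \<Rightarrow> 'n \<Rightarrow> 'n \<Rightarrow> nat pmf" and q0 :: "real \<Rightarrow> (nat^'n^'n) pmf"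
      and \<pi> :: "real \<Rightarrow> (nat^'n^'n) pmf" and \<epsilon> :: real and r :: nat
    assume H: "\<forall>\<epsilon>. 0 < \<epsilon> \<and> \<epsilon> < 1 \<longrightarrow>
          (\<forall>i j. set_pmf (a \<epsilon> i j) \<subseteq> {0..Amax}) \<and>
          (\<forall>i j. measure_pmf.expectation (a \<epsilon> i j) real = (1 - \<epsilon>) * \<nu>$i$j) \<and>
          (\<Sum>i\<in>UNIV. \<Sum>j\<in>UNIV. measure_pmf.variance (a \<epsilon> i j) real) \<le> \<sigma>t\<^sup>2 \<and>
          (\<forall>x. (\<lambda>t. pmf (qdist c (a \<epsilon>) (q0 \<epsilon>) t) x) \<longlonglongrightarrow> pmf (\<pi> \<epsilon>) x)"
      and eps: "0 < \<epsilon> \<and> \<epsilon> \<le> \<nu>'" and r1: "1 \<le> r"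
    have e1: "\<epsilon> < 1" using eps by (simp add: \<nu>'_def)
    have aset: "\<And>i j. set_pmf (a \<epsilon> i j) \<subseteq> {0..Amax}" using H eps e1 by blast
    have amean: "\<And>i j. measure_pmf.expectation (a \<epsilon> i j) real = (1 - \<epsilon>) * \<nu>$i$j" using H eps e1 by blast
    have conv: "\<And>x. (\<lambda>t. pmf (qdist c (a \<epsilon>) (q0 \<epsilon>) t) x) \<longlonglongrightarrow> pmf (\<pi> \<epsilon>) x" using H eps e1 by blast
    have epsnu: "\<epsilon> * cnorm c \<nu> \<le> 1 / (2 * Kc c \<eta>)"
    proof -
      have "\<epsilon> \<le> 1 / (2 * K * (nv + 1))" using eps by (simp add: \<nu>'_def)
      then have "\<epsilon> * (nv + 1) \<le> 1 / (2 * K * (nv + 1)) * (nv + 1)"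
        using nv0 by (intro mult_right_mono) auto
      also have "\<dots> = 1 / (2 * K)"
      proof -
        have "nv + 1 \<noteq> 0" using nv0 by simp
        then show ?thesis by simp
      qed
      finally have "\<epsilon> * (nv + 1) \<le> 1 / (2 * K)" .
      moreover have "\<epsilon> * nv \<le> \<epsilon> * (nv + 1)" using eps by simp
      ultimately show ?thesis by (simp add: nv_def K_def)
    qed
    have stat: "bind_pmf (\<pi> \<epsilon>) (qstep c (a \<epsilon>)) = \<pi> \<epsilon>"
      by (rule stationary[OF conv]) simp
    have expb: "(\<integral>\<^sup>+Q. ennreal (exp (\<theta> * Vc c (realmat Q))) \<partial>\<pi> \<epsilon>) \<le> ennreal B"
      unfolding B_def
    proof (rule exp_drift_moment[OF stat th0 rho0 rho1])
      show "0 \<le> C" by (simp add: C_def)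
      fix Q :: "nat^'n^'n"
      assume "\<kappa> < Vc c (realmat Q)"
      then show "(\<integral>\<^sup>+y. ennreal (exp (\<theta> * Vc c (realmat y))) \<partial>qstep c (a \<epsilon>) Q)
            \<le> ennreal (\<rho> * exp (\<theta> * Vc c (realmat Q)))"
        unfolding \<rho>_def K_def
        by (intro drift_exp[OF cpos nuF eta aset amean _ epsnu Kc_pos[OF cpos eta(1)] D2_pos[OF cpos] th0])
           (use eps th1 th2 in \<open>auto simp: \<kappa>_def K_def D_def\<close>)
    next
      fix Q :: "nat^'n^'n"
      assume "Vc c (realmat Q) \<le> \<kappa>"
      then show "(\<integral>\<^sup>+y. ennreal (exp (\<theta> * Vc c (realmat y))) \<partial>qstep c (a \<epsilon>) Q) \<le> ennreal C"
        unfolding C_def D_def by (rule drift_small[OF cpos aset th0])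
    qed
    have pw: "cnorm c (perp_K c (realmat Q)) ^ r \<le> fact r / \<theta> ^ r * exp (\<theta> * Vc c (realmat Q))" for Q
    proof -
      define V where "V = Vc c (realmat Q)"
      have V0: "0 \<le> V" unfolding V_def Vc_def by (rule cnorm_nonneg[OF cpos])
      have "(\<theta> * V) ^ r / fact r \<le> exp (\<theta> * V)" using th0 V0 by (intro pow_le_exp) auto
      then have "\<theta> ^ r * V ^ r \<le> fact r * exp (\<theta> * V)"
        by (simp add: power_mult_distrib field_simps)
      then have "V ^ r \<le> fact r / \<theta> ^ r * exp (\<theta> * V)"
        using th0 by (simp add: field_simps)
      then show ?thesis by (simp add: V_def Vc_def)
    qed
    have "(\<integral>\<^sup>+Q. ennreal (cnorm c (perp_K c (realmat Q)) ^ r) \<partial>measure_pmf (\<pi> \<epsilon>))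
        \<le> (\<integral>\<^sup>+Q. ennreal (fact r / \<theta> ^ r) * ennreal (exp (\<theta> * Vc c (realmat Q))) \<partial>measure_pmf (\<pi> \<epsilon>))"
    proof (intro nn_integral_mono)
      fix Q :: "nat^'n^'n"
      have "ennreal (fact r / \<theta> ^ r) * ennreal (exp (\<theta> * Vc c (realmat Q)))
          = ennreal (fact r / \<theta> ^ r * exp (\<theta> * Vc c (realmat Q)))"
        using th0 by (intro ennreal_mult[symmetric]) auto
      then show "ennreal (cnorm c (perp_K c (realmat Q)) ^ r)
          \<le> ennreal (fact r / \<theta> ^ r) * ennreal (exp (\<theta> * Vc c (realmat Q)))"
        using ennreal_leI[OF pw[of Q]] by simp
    qed
    also have "\<dots> = ennreal (fact r / \<theta> ^ r) * (\<integral>\<^sup>+Q. ennreal (exp (\<theta> * Vc c (realmat Q))) \<partial>measure_pmf (\<pi> \<epsilon>))"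
      by (simp add: nn_integral_cmult)
    also have "\<dots> \<le> ennreal (fact r / \<theta> ^ r) * ennreal B"
      by (intro mult_left_mono expb) simp
    also have "\<dots> = ennreal (fact r * B / \<theta> ^ r)"
      using th0 B1 by (simp add: ennreal_mult[symmetric])
    also have "\<dots> \<le> ennreal (M r ^ r)"
    proof (intro ennreal_leI)
      have fr: "(1::real) \<le> fact r" by (rule fact_ge_1)
      have "(1::real) * 1 \<le> fact r * B" using fr B1 by (intro mult_mono) auto
      then have f1: "1 \<le> (fact r :: real) * B" by simp
      have "fact r * B \<le> (fact r * B) ^ r" by (rule pow_ge_self[OF f1 r1])
      then have "fact r * B / \<theta> ^ r \<le> (fact r * B) ^ r / \<theta> ^ r"
        using th0 by (intro divide_right_mono) auto
      also have "\<dots> = M r ^ r" by (simp add: M_def power_divide)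
      finally show "fact r * B / \<theta> ^ r \<le> M r ^ r" .
    qed
    finally show "(\<integral>\<^sup>+Q. ennreal (cnorm c (perp_K c (realmat Q)) ^ r) \<partial>measure_pmf (\<pi> \<epsilon>)) \<le> ennreal (M r ^ r)" .
  qed
qed

end
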